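(* Let $k\ge2$, $L\ge3$, and let $T:\Pi_L\to\Sigma_k$ be the map constructed below (with $\Pi=\Pi_L$). If $y\in Trans(\Pi_L)$, then $\omega_\xi(T(y))=\omega_\xi(y)$ for each $\xi\in\{\overline d,\underline d,B^*,B_*\}$, and $\omega_\sigma(y)\subsetneq\omega_\sigma(T(y))$.
   Context: $\Sigma_k=\{0,\dots,k-1\}^{\mathbb{N}}$ with metric $d(x,y)=\sum_{n\ge1}\delta(x_n,y_n)/2^n$ ($\delta(a,b)=0$ if $a=b$, $1$ otherwise) and shift $\sigma$. $\Pi_L=\{x\in\Sigma_k:$ no $L$ consecutive symbols of $x$ are all equal$\}$; $Trans(\Pi_L)=\{y\in\Pi_L:\omega_\sigma(y)=\Pi_L\}$. A finite word is contained in $\Pi$ if it is a prefix of some point of $\Pi$. Construction of $T$: enumerate all finite words contained in $\Pi$ as $C_1,C_2,\dots$; fix a finite word $A_1$ not contained in $\Pi$; for $y\in\Pi$ let $Y_n$ be its first $n$ symbols; $B_n=C_nY_n\cdots Y_n$ ($Y_n$ repeated $|A_n|^2$ times), $A_{n+1}=A_nB_nA_n$; $T(y)$ is the point having every $A_n$ as prefix; the construction requires $|C_n|=o(|A_n|)$. $N(x,U)=\{n\ge1:\sigma^nx\in U\}$; $\overline d,\underline d$ are upper/lower asymptotic densities, $B^*,B_*$ Banach upper/lower densities; $\omega_\xi(x)=\{z:\xi(N(x,B_\varepsilon(z)))>0\ \forall\varepsilon>0\}$; $\omega_\sigma$ the $\omega$-limit set. *)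

theory Defs
  imports "HOL-Analysis.Analysis" "HOL-Library.Liminf_Limsup"
begin

text \<open>Points of Sigma_k are sequences nat => nat; the paper's symbol x_n is x (n-1).\<close>

definition Sigma :: "nat \<Rightarrow> (nat \<Rightarrow> nat) set" where
  "Sigma k = {x. \<forall>i. x i < k}"

definition sdist :: "(nat \<Rightarrow> nat) \<Rightarrow> (nat \<Rightarrow> nat) \<Rightarrow> real" where
  "sdist x y = (\<Sum>i. (if x i = y i then 0 else 1) / 2 ^ (Suc i))"

definition shift :: "(nat \<Rightarrow> nat) \<Rightarrow> (nat \<Rightarrow> nat)" where
  "shift x = (\<lambda>i. x (Suc i))"

definition sball :: "nat \<Rightarrow> (nat \<Rightarrow> nat) \<Rightarrow> real \<Rightarrow> (nat \<Rightarrow> nat) set" where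
  "sball k z e = {x \<in> Sigma k. sdist x z < e}"

definition PiL :: "nat \<Rightarrow> nat \<Rightarrow> (nat \<Rightarrow> nat) set" where
  "PiL k L = {x \<in> Sigma k. \<not> (\<exists>i. \<forall>j<L. x (i + j) = x i)}"

definition hits :: "(nat \<Rightarrow> nat) \<Rightarrow> (nat \<Rightarrow> nat) set \<Rightarrow> nat set" where
  "hits x U = {n. n \<ge> 1 \<and> (shift ^^ n) x \<in> U}"

definition omega_shift :: "nat \<Rightarrow> (nat \<Rightarrow> nat) \<Rightarrow> (nat \<Rightarrow> nat) set" where
  "omega_shift k x = {z \<in> Sigma k. \<forall>e>0. infinite (hits x (sball k z e))}"

definition Trans :: "nat \<Rightarrow> nat \<Rightarrow> (nat \<Rightarrow> nat) set" where
  "Trans k L = {y \<in> PiL k L. omega_shift k y = PiL k L}"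

definition upper_density :: "nat set \<Rightarrow> ereal" where
  "upper_density A = limsup (\<lambda>n. ereal (real (card (A \<inter> {1..n})) / real n))"

definition lower_density :: "nat set \<Rightarrow> ereal" where
  "lower_density A = liminf (\<lambda>n. ereal (real (card (A \<inter> {1..n})) / real n))"

definition banach_upper :: "nat set \<Rightarrow> ereal" where
  "banach_upper A = limsup (\<lambda>n. SUP m. ereal (real (card (A \<inter> {m+1..m+n})) / real n))"

definition banach_lower :: "nat set \<Rightarrow> ereal" where
  "banach_lower A = liminf (\<lambda>n. INF m. ereal (real (card (A \<inter> {m+1..m+n})) / real n))"

definition omega_xi :: "nat \<Rightarrow> (nat set \<Rightarrow> ereal) \<Rightarrow> (nat \<Rightarrow> nat) \<Rightarrow> (nat \<Rightarrow> nat) set" where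
  "omega_xi k xi x = {z \<in> Sigma k. \<forall>e>0. xi (hits x (sball k z e)) > 0}"

definition is_prefix :: "nat list \<Rightarrow> (nat \<Rightarrow> nat) \<Rightarrow> bool" where
  "is_prefix w x = (\<forall>i<length w. x i = w ! i)"

definition contained :: "(nat \<Rightarrow> nat) set \<Rightarrow> nat list \<Rightarrow> bool" where
  "contained P w = (\<exists>x\<in>P. is_prefix w x)"

text \<open>The words A_n: Aw A1 C y m is A_(m+1); C n is C_n (n >= 1);
  Y_n = first n symbols of y.\<close>
primrec Aw :: "nat list \<Rightarrow> (nat \<Rightarrow> nat list) \<Rightarrow> (nat \<Rightarrow> nat) \<Rightarrow> nat \<Rightarrow> nat list" where
  "Aw A1 C y 0 = A1"
| "Aw A1 C y (Suc m) =
     (let A = Aw A1 C y m; n = Suc m;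
          B = C n @ concat (replicate ((length A)^2) (map y [0..<n]))
      in A @ B @ A)"

definition Tmap :: "nat list \<Rightarrow> (nat \<Rightarrow> nat list) \<Rightarrow> (nat \<Rightarrow> nat) \<Rightarrow> (nat \<Rightarrow> nat)" where
  "Tmap A1 C y = (THE x. \<forall>m. is_prefix (Aw A1 C y m) x)"

end

theory Submission
  imports Defs
begin

lemma concat_replicate_nth:
  assumes "t < r" "i < length w"
  shows "concat (replicate r w) ! (t * length w + i) = w ! i"
  using assms
proof (induction r arbitrary: t)
  case 0 then show ?case by simp
next
  case (Suc r)
  show ?case
  proof (cases t)
    case 0 then show ?thesis using Suc.prems by (simp add: nth_append)
  next
    case (Suc t')
    then have "concat (replicate (Suc r) w) ! (t * length w + i)
       = concat (replicate r w) ! (t' * length w + i)"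
      using Suc.prems by (simp add: nth_append)
    moreover have "t' < r" using Suc.prems \<open>t = Suc t'\<close> by simp
    ultimately show ?thesis using Suc.IH[of t'] Suc.prems by simp
  qed
qed

lemma length_concat_replicate: "length (concat (replicate r w)) = r * length w"
  by (induction r) auto

lemma shift_pow: "(shift ^^ n) x i = x (n + i)"
  by (induction n arbitrary: i) (auto simp: shift_def)

lemma alt_PiL: "k \<ge> 2 \<Longrightarrow> L \<ge> 3 \<Longrightarrow> (\<lambda>i. i mod 2) \<in> PiL k L"
proof -
  assume k: "k \<ge> 2" and L: "L \<ge> 3"
  have "\<not> (\<forall>j<L. (i + j) mod 2 = i mod 2)" for i
  proof
    assume "\<forall>j<L. (i + j) mod 2 = i mod 2"
    moreover have "(1::nat) < L" using L by simp
    ultimately have "(i + 1) mod 2 = i mod 2" by blast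
    then show False by presburger
  qed
  moreover have "(\<lambda>i. i mod 2) \<in> Sigma k" using k by (auto simp: Sigma_def)
  ultimately show ?thesis by (auto simp: PiL_def)
qed

lemma PiL_shift:
  assumes "x \<in> PiL k L" shows "(\<lambda>i. x (n + i)) \<in> PiL k L"
proof -
  have "\<not> (\<forall>j<L. x (n + i + j) = x (n + i))" for i using assms unfolding PiL_def by blast
  then show ?thesis using assms unfolding PiL_def Sigma_def by (simp add: add.assoc)
qed

lemma PiL_norun: "x \<in> PiL k L \<Longrightarrow> \<exists>j<L. x (i + j) \<noteq> x i"
  unfolding PiL_def by auto

locale tsetup =
  fixes k L :: nat and A1 :: "nat list" and C :: "nat \<Rightarrow> nat list" and y :: "nat \<Rightarrow> nat"
  assumes k2: "k \<ge> 2" and L3: "L \<ge> 3"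
    and bij: "bij_betw C {1..} {w. contained (PiL k L) w}"
    and A1k: "set A1 \<subseteq> {..<k}" and A1nc: "\<not> contained (PiL k L) A1"
    and lim: "(\<lambda>m. real (length (C (Suc m))) / real (length (Aw A1 C y m))) \<longlonglongrightarrow> 0"
    and yT: "y \<in> Trans k L"
begin

abbreviation "A \<equiv> Aw A1 C y"
definition "a m = length (A m)"
definition "cl m = length (C (Suc m))"
definition "Yb m = concat (replicate ((a m)^2) (map y [0..<Suc m]))"
definition "s m = a m + cl m"
definition "d m = cl m + Suc m * (a m)^2"
definition "T = Tmap A1 C y"

lemma A_Suc: "A (Suc m) = A m @ C (Suc m) @ Yb m @ A m"
  by (simp add: Let_def Yb_def a_def)

declare Aw.simps(2)[simp del]

lemma len_Yb: "length (Yb m) = Suc m * (a m)^2"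
  by (simp add: Yb_def length_concat_replicate)

lemma a_Suc: "a (Suc m) = 2 * a m + cl m + Suc m * (a m)^2"
  unfolding a_def[of "Suc m"] A_Suc by (simp add: a_def[symmetric] cl_def len_Yb)

lemma a_Suc': "a (Suc m) = a m + d m + a m"
  by (simp add: a_Suc d_def)

lemma yPiL: "y \<in> PiL k L" using yT by (simp add: Trans_def)
lemma y_omega: "omega_shift k y = PiL k L" using yT by (simp add: Trans_def)

lemma y_Sigma: "y i < k" using yPiL by (auto simp: PiL_def Sigma_def)

lemma contained_nonempty: "contained (PiL k L) []"
  using alt_PiL[OF k2 L3] by (auto simp: contained_def is_prefix_def)

lemma A1_ne: "A1 \<noteq> []" using A1nc contained_nonempty by auto

lemma a0: "a 0 = length A1" by (simp add: a_def)

lemma a_pos: "a m \<ge> 1"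
proof (induction m)
  case 0 then show ?case using A1_ne a0 by (simp add: Suc_le_eq)
next
  case (Suc m) then show ?case by (simp add: a_Suc)
qed

lemma a_Suc_ge: "a (Suc m) \<ge> 2 * a m" by (simp add: a_Suc)

lemma a_Suc_gt: "a (Suc m) > a m" using a_Suc_ge[of m] a_pos[of m] by linarith

lemma a_strict: "strict_mono a" using a_Suc_gt by (simp add: strict_mono_Suc_iff)

lemma a_ge: "a m \<ge> Suc m"
proof (induction m)
  case 0 then show ?case using a_pos[of 0] by simp
next
  case (Suc m) then show ?case using a_Suc_gt[of m] by simp
qed

lemma a_Suc_ge2: "a (Suc m) \<ge> Suc m * (a m)^2" by (simp add: a_Suc)

lemma a_mono: "m \<le> m' \<Longrightarrow> a m \<le> a m'"
  using a_strict strict_mono_less_eq by blast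

lemma A_prefix1: "i < a m \<Longrightarrow> A (Suc m) ! i = A m ! i"
  by (simp add: A_Suc nth_append a_def)

lemma A_prefix: "m \<le> m' \<Longrightarrow> i < a m \<Longrightarrow> A m' ! i = A m ! i"
proof (induction m' rule: dec_induct)
  case base then show ?case by simp
next
  case (step n)
  then show ?case using A_prefix1[of i n] a_mono[of m n] by simp
qed

lemma T_is: "T = (\<lambda>i. A i ! i)"
proof -
  have P: "\<forall>m. is_prefix (A m) (\<lambda>i. A i ! i)"
  proof
    fix m
    show "is_prefix (A m) (\<lambda>i. A i ! i)"
      unfolding is_prefix_def
    proof (intro allI impI)
      fix i assume i: "i < length (A m)"
      show "A i ! i = A m ! i"
      proof (cases "i \<le> m")
        case True then show ?thesis using A_prefix[of i m i] a_ge[of i] by (simp add: a_def)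
        next
        case False then show ?thesis using A_prefix[of m i i] i by (simp add: a_def)
      qed
    qed
  qed
  have U: "x = (\<lambda>i. A i ! i)" if "\<forall>m. is_prefix (A m) x" for x
  proof
    fix i
    have "is_prefix (A i) x" using that by blast
    moreover have "i < length (A i)" using a_ge[of i] unfolding a_def by simp
    ultimately show "x i = A i ! i" unfolding is_prefix_def by blast
  qed
  show ?thesis unfolding T_def Tmap_def
    by (rule the_equality) (rule P, rule U)
qed

lemma T_A: "i < a m \<Longrightarrow> T i = A m ! i"
  unfolding T_is
proof -
  assume i: "i < a m"
  show "A i ! i = A m ! i"
  proof (cases "i \<le> m")
    case True then show ?thesis using A_prefix[of i m i] a_ge[of i] by simp
  next
    case False then show ?thesis using A_prefix[of m i i] i by simp
  qed
qed

lemma T_C: "j < cl m \<Longrightarrow> T (a m + j) = C (Suc m) ! j"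
proof -
  assume j: "j < cl m"
  have "a m + j < a (Suc m)" using j by (simp add: a_Suc)
  then have "T (a m + j) = A (Suc m) ! (a m + j)" by (rule T_A)
  also have "\<dots> = C (Suc m) ! j" using j by (simp add: A_Suc nth_append a_def cl_def)
  finally show ?thesis .
qed

lemma T_Y: "t < (a m)^2 \<Longrightarrow> r < Suc m \<Longrightarrow> T (s m + t * Suc m + r) = y r"
proof -
  assume t: "t < (a m)^2" and r: "r < Suc m"
  have le: "t * Suc m + r < Suc m * (a m)^2"
  proof -
    have "t * Suc m + r < Suc t * Suc m" using r by simp
    also have "\<dots> \<le> (a m)^2 * Suc m" using t by (intro mult_right_mono) auto
    finally show ?thesis by (simp add: mult.commute)
  qed
  have "s m + t * Suc m + r < a (Suc m)" using le by (simp add: a_Suc s_def)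
  then have "T (s m + t * Suc m + r) = A (Suc m) ! (s m + t * Suc m + r)" by (rule T_A)
  also have "\<dots> = Yb m ! (t * Suc m + r)"
    using le unfolding A_Suc s_def a_def cl_def
    by (simp add: nth_append len_Yb[unfolded a_def] add.assoc del: mult_Suc_right mult_Suc)
  also have "\<dots> = y r" unfolding Yb_def
    using concat_replicate_nth[of t "(a m)^2" r "map y [0..<Suc m]"] t r by (simp del: upt_Suc)
  finally show ?thesis .
qed

lemma T_copy: "i < a m \<Longrightarrow> T (a m + d m + i) = T i"
proof -
  assume i: "i < a m"
  have "a m + d m + i < a (Suc m)" using i a_Suc'[of m] by simp
  then have "T (a m + d m + i) = A (Suc m) ! (a m + d m + i)" by (rule T_A)
  also have "\<dots> = A m ! i"
    using i by (simp add: A_Suc nth_append a_def[symmetric] cl_def[symmetric] d_def len_Yb)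
  also have "\<dots> = T i" using T_A[OF i] by simp
  finally show ?thesis .
qed

lemma T_suffix: "i \<le> m \<Longrightarrow> p < a i \<Longrightarrow> T (a m - a i + p) = T p"
proof (induction m rule: dec_induct)
  case base then show ?case by simp
next
  case (step n)
  have "a n - a i + p < a n" using step a_mono[of i n] by linarith
  then have cp: "T (a n + d n + (a n - a i + p)) = T (a n - a i + p)" by (rule T_copy)
  have "a (Suc n) - a i + p = a n + d n + (a n - a i + p)"
    using a_Suc'[of n] a_mono[of i n] step by simp
  have "T (a (Suc n) - a i + p) = T (a n + d n + (a n - a i + p))"
    by (simp only: \<open>a (Suc n) - a i + p = a n + d n + (a n - a i + p)\<close>)
  also have "\<dots> = T (a n - a i + p)" by (rule cp)
  also have "\<dots> = T p" using step.IH step.prems by blast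
  finally show ?case .
qed

lemma contained_lt: "contained (PiL k L) w \<Longrightarrow> i < length w \<Longrightarrow> w ! i < k"
proof -
  assume "contained (PiL k L) w" "i < length w"
  then obtain x where "x \<in> PiL k L" "x i = w ! i" unfolding contained_def is_prefix_def by blast
  then show ?thesis unfolding PiL_def Sigma_def by (metis (mono_tags, lifting) mem_Collect_eq)
qed

lemma C_contained: "n \<ge> 1 \<Longrightarrow> contained (PiL k L) (C n)"
  using bij unfolding bij_betw_def by auto

lemma set_A: "set (A m) \<subseteq> {..<k}"
proof (induction m)
  case 0 then show ?case using A1k by simp
next
  case (Suc m)
  have "set (concat (replicate r w)) \<subseteq> set w" for r and w :: "nat list" by (induction r) auto
  then have Y: "set (Yb m) \<subseteq> set (map y [0..<Suc m])" unfolding Yb_def by blast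
  have Y2: "set (map y [0..<Suc m]) \<subseteq> {..<k}" using y_Sigma by auto
  have Cs: "set (C (Suc m)) \<subseteq> {..<k}"
  proof
    fix v assume "v \<in> set (C (Suc m))"
    then obtain i where "i < length (C (Suc m))" "v = C (Suc m) ! i" by (metis in_set_conv_nth)
    then show "v \<in> {..<k}" using contained_lt[OF C_contained[of "Suc m"]] by simp
  qed
  have "set (Yb m) \<subseteq> {..<k}" using Y Y2 by (rule subset_trans)
  then show ?case unfolding A_Suc using Suc.IH Cs by simp
qed

lemma A_lt: "i < a m \<Longrightarrow> A m ! i < k"
  using set_A[of m] nth_mem[of i "A m"] unfolding a_def by blast

lemma T_Sigma: "T \<in> Sigma k"
  unfolding Sigma_def
proof (intro CollectI allI)
  fix i have "i < a i" using a_ge[of i] by simp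
  then show "T i < k" using A_lt T_A by metis
qed

end

definition Occ :: "(nat \<Rightarrow> nat) \<Rightarrow> (nat \<Rightarrow> nat) \<Rightarrow> nat \<Rightarrow> nat set" where
  "Occ x z M = {n. n \<ge> 1 \<and> (\<forall>i<M. x (n + i) = z i)}"

lemma sdist_summable: "summable (\<lambda>i. (if x i = z i then 0 else 1) / (2::real) ^ (Suc i))"
proof (rule summable_comparison_test[where g = "\<lambda>i. (1/2::real) ^ Suc i"])
  show "\<exists>N. \<forall>n\<ge>N. norm ((if x n = z n then 0 else 1) / (2::real) ^ Suc n) \<le> (1/2) ^ Suc n"
    by (auto simp: power_one_over)
  show "summable (\<lambda>i. (1/2::real) ^ Suc i)"
    using summable_geometric[of "1/2::real"] by (simp add: summable_Suc_iff)
qed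

lemma sdist_ge:
  assumes "i < M" "x i \<noteq> z i" shows "sdist x z \<ge> 1 / 2 ^ M"
proof -
  let ?f = "\<lambda>i. (if x i = z i then 0 else 1) / (2::real) ^ (Suc i)"
  have "sum ?f {..<Suc i} \<le> suminf ?f"
    by (rule sum_le_suminf[OF sdist_summable]) auto
  moreover have "?f i \<le> sum ?f {..<Suc i}"
    by (rule member_le_sum) auto
  moreover have "?f i = 1 / 2 ^ Suc i" using assms by simp
  moreover have "(1::real) / 2 ^ M \<le> 1 / 2 ^ Suc i"
    using assms(1) by (intro divide_left_mono power_increasing) auto
  ultimately show ?thesis unfolding sdist_def by linarith
qed

lemma sdist_le:
  assumes "\<forall>i<N. x i = z i" shows "sdist x z \<le> 1 / 2 ^ N"
proof -
  let ?f = "\<lambda>i. (if x i = z i then 0 else 1) / (2::real) ^ (Suc i)"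
  let ?g = "\<lambda>i. (if i < N then 0 else 1) / (2::real) ^ (Suc i)"
  have sg: "summable ?g"
  proof (rule summable_comparison_test[where g = "\<lambda>i. (1/2::real) ^ Suc i"])
    show "\<exists>Na. \<forall>n\<ge>Na. norm (?g n) \<le> (1/2) ^ Suc n"
      by (auto simp: power_one_over)
    show "summable (\<lambda>i. (1/2::real) ^ Suc i)"
      using summable_geometric[of "1/2::real"] by (simp add: summable_Suc_iff)
  qed
  have "suminf ?f \<le> suminf ?g"
    by (rule suminf_le[OF _ sdist_summable sg]) (use assms in auto)
  also have "suminf ?g = suminf (\<lambda>i. ?g (i + N)) + sum ?g {..<N}"
    by (rule suminf_split_initial_segment[OF sg])
  also have "sum ?g {..<N} = 0" by simp
  also have "(\<lambda>i. ?g (i + N)) = (\<lambda>i. (1 / 2 ^ Suc N) * (1/2::real) ^ i)"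
    by (auto simp: power_add power_one_over field_simps)
  also have "suminf \<dots> = (1 / 2 ^ Suc N) * suminf (\<lambda>i. (1/2::real) ^ i)"
    by (rule suminf_mult[OF summable_geometric]) simp
  also have "\<dots> = (1 / 2 ^ Suc N) * 2"
    using suminf_geometric[of "1/2::real"] by simp
  also have "\<dots> = 1 / 2 ^ N" by simp
  finally show ?thesis unfolding sdist_def by simp
qed

lemma shift_Sigma: "x \<in> Sigma k \<Longrightarrow> (shift ^^ n) x \<in> Sigma k"
  by (auto simp: Sigma_def shift_pow)

lemma hits_ball_sub: "hits x (sball k z (1 / 2 ^ M)) \<subseteq> Occ x z M"
proof
  fix n assume "n \<in> hits x (sball k z (1 / 2 ^ M))"
  then have n: "n \<ge> 1" and d: "sdist ((shift ^^ n) x) z < 1 / 2 ^ M"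
    by (auto simp: hits_def sball_def)
  have "\<forall>i<M. x (n + i) = z i"
  proof (intro allI impI, rule ccontr)
    fix i assume "i < M" "x (n + i) \<noteq> z i"
    then have "sdist ((shift ^^ n) x) z \<ge> 1 / 2 ^ M" by (intro sdist_ge) (auto simp: shift_pow)
    then show False using d by simp
  qed
  then show "n \<in> Occ x z M" using n by (simp add: Occ_def)
qed

lemma O_sub_hits:
  assumes "x \<in> Sigma k" "1 / 2 ^ M < e"
  shows "Occ x z M \<subseteq> hits x (sball k z e)"
proof
  fix n assume "n \<in> Occ x z M"
  then have n: "n \<ge> 1" and ag: "\<forall>i<M. x (n + i) = z i" by (auto simp: Occ_def)
  have "sdist ((shift ^^ n) x) z \<le> 1 / 2 ^ M" by (rule sdist_le) (use ag in \<open>simp add: shift_pow\<close>)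
  then show "n \<in> hits x (sball k z e)" using n assms shift_Sigma[OF assms(1)]
    by (auto simp: hits_def sball_def)
qed

lemma exists_pow_small: "e > 0 \<Longrightarrow> \<exists>M. 1 / (2::real) ^ M < e"
proof -
  assume e: "e > (0::real)"
  obtain M :: nat where "1 / e < M" using reals_Archimedean2 by blast
  moreover have "real M < 2 ^ M"
    using less_exp[of M] by (metis of_nat_less_iff of_nat_numeral of_nat_power)
  ultimately have "1 / e < 2 ^ M" by linarith
  then show ?thesis using e by (intro exI[of _ M]) (simp add: field_simps)
qed

definition monoset :: "(nat set \<Rightarrow> ereal) \<Rightarrow> bool" where
  "monoset xi = (\<forall>A B. A \<subseteq> B \<longrightarrow> xi A \<le> xi B)"

lemma omega_xi_O:
  assumes "x \<in> Sigma k" "monoset xi"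
  shows "omega_xi k xi x = {z \<in> Sigma k. \<forall>M. xi (Occ x z M) > 0}"
proof (intro set_eqI iffI)
  fix z assume z: "z \<in> omega_xi k xi x"
  show "z \<in> {z \<in> Sigma k. \<forall>M. xi (Occ x z M) > 0}"
  proof (simp, intro conjI allI)
    show "z \<in> Sigma k" using z by (simp add: omega_xi_def)
    fix M
    have "xi (hits x (sball k z (1 / 2 ^ M))) > 0" using z by (simp add: omega_xi_def)
    moreover have "xi (hits x (sball k z (1 / 2 ^ M))) \<le> xi (Occ x z M)"
      using assms(2) hits_ball_sub unfolding monoset_def by blast
    ultimately show "xi (Occ x z M) > 0" by simp
  qed
next
  fix z assume z: "z \<in> {z \<in> Sigma k. \<forall>M. xi (Occ x z M) > 0}"
  show "z \<in> omega_xi k xi x" unfolding omega_xi_def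
  proof (simp, intro conjI allI impI)
    show "z \<in> Sigma k" using z by simp
    fix e :: real assume "e > 0"
    then obtain M where M: "1 / (2::real) ^ M < e" using exists_pow_small by blast
    have "xi (Occ x z M) > 0" using z by simp
    moreover have "xi (Occ x z M) \<le> xi (hits x (sball k z e))"
      using assms(2) O_sub_hits[OF assms(1) M] unfolding monoset_def by blast
    ultimately show "xi (hits x (sball k z e)) > 0" by simp
  qed
qed

lemma card_win_mono: "(A::nat set) \<subseteq> B \<Longrightarrow> card (A \<inter> {m+1..m+n}) \<le> card (B \<inter> {m+1..m+n})"
  by (intro card_mono) auto

lemma mono_upper: "monoset upper_density"
  unfolding monoset_def upper_density_def
proof (intro allI impI Limsup_mono always_eventually allI)
  fix A B :: "nat set" and n assume "A \<subseteq> B"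
  then have "card (A \<inter> {1..n}) \<le> card (B \<inter> {1..n})" by (intro card_mono) auto
  then show "ereal (real (card (A \<inter> {1..n})) / real n) \<le> ereal (real (card (B \<inter> {1..n})) / real n)"
    by (simp add: divide_right_mono)
qed

lemma mono_lower: "monoset lower_density"
  unfolding monoset_def lower_density_def
proof (intro allI impI Liminf_mono always_eventually allI)
  fix A B :: "nat set" and n assume "A \<subseteq> B"
  then have "card (A \<inter> {1..n}) \<le> card (B \<inter> {1..n})" by (intro card_mono) auto
  then show "ereal (real (card (A \<inter> {1..n})) / real n) \<le> ereal (real (card (B \<inter> {1..n})) / real n)"
    by (simp add: divide_right_mono)
qed

lemma mono_bu: "monoset banach_upper"
  unfolding monoset_def banach_upper_def
proof (intro allI impI Limsup_mono always_eventually allI SUP_mono)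
  fix A B :: "nat set" and n m assume "A \<subseteq> B"
  then have "card (A \<inter> {m+1..m+n}) \<le> card (B \<inter> {m+1..m+n})" by (intro card_mono) auto
  then show "\<exists>m'\<in>UNIV. ereal (real (card (A \<inter> {m+1..m+n})) / real n) \<le> ereal (real (card (B \<inter> {m'+1..m'+n})) / real n)"
    by (intro bexI[of _ m]) (simp_all add: divide_right_mono)
qed

lemma mono_bl: "monoset banach_lower"
  unfolding monoset_def banach_lower_def
proof (intro allI impI Liminf_mono always_eventually allI INF_mono)
  fix A B :: "nat set" and n m assume "A \<subseteq> B"
  then have "card (A \<inter> {m+1..m+n}) \<le> card (B \<inter> {m+1..m+n})" by (intro card_mono) auto
  then show "\<exists>m'\<in>UNIV. ereal (real (card (A \<inter> {m'+1..m'+n})) / real n) \<le> ereal (real (card (B \<inter> {m+1..m+n})) / real n)"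
    by (intro bexI[of _ m]) (simp_all add: divide_right_mono)
qed


definition "r1 A n = real (card (A \<inter> {1..n})) / real n"
definition "rb A m n = real (card (A \<inter> {m+1..m+n})) / real n"

lemma ereal_between: "0 < (x::ereal) \<Longrightarrow> \<exists>c::real. 0 < c \<and> ereal c < x"
  using ereal_dense2 by (metis ereal_less(2) less_ereal.simps(1))

lemma E1a: "upper_density A > 0 \<Longrightarrow> \<exists>c>0. \<forall>N. \<exists>n\<ge>N. c \<le> r1 A n"
proof -
  assume pos: "upper_density A > 0"
  obtain c where c: "0 < c" "ereal c < upper_density A" using ereal_between[OF pos] by blast
  have "\<forall>N. \<exists>n\<ge>N. c \<le> r1 A n"
  proof (rule ccontr)
    assume "\<not> (\<forall>N. \<exists>n\<ge>N. c \<le> r1 A n)"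
    then obtain N where "\<forall>n\<ge>N. r1 A n < c" by (meson not_le)
    then have "eventually (\<lambda>n. ereal (r1 A n) \<le> ereal c) sequentially"
      unfolding eventually_sequentially by (auto intro: less_imp_le)
    then have "upper_density A \<le> c" unfolding upper_density_def r1_def[symmetric]
      by (rule Limsup_bounded)
    then show False using c by simp
  qed
  then show ?thesis using c by blast
qed

lemma E1b: "c > 0 \<Longrightarrow> \<forall>N. \<exists>n\<ge>N. c \<le> r1 A n \<Longrightarrow> upper_density A > 0"
proof (rule ccontr)
  assume c: "c > 0" and fr: "\<forall>N. \<exists>n\<ge>N. c \<le> r1 A n" and "\<not> upper_density A > 0"
  then have "upper_density A < ereal c" by (simp add: not_less) (metis c ereal_less(2) order_le_less_trans)
  then have "eventually (\<lambda>n. ereal (r1 A n) < ereal c) sequentially"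
    unfolding upper_density_def r1_def[symmetric] by (rule Limsup_lessD)
  then obtain N where "\<forall>n\<ge>N. r1 A n < c" unfolding eventually_sequentially by auto
  then show False using fr by (meson not_le)
qed

lemma E2a: "lower_density A > 0 \<Longrightarrow> \<exists>c>0. \<exists>N. \<forall>n\<ge>N. c \<le> r1 A n"
proof -
  assume pos: "lower_density A > 0"
  obtain c where c: "0 < c" "ereal c < lower_density A" using ereal_between[OF pos] by blast
  have "eventually (\<lambda>n. ereal c < ereal (r1 A n)) sequentially"
    using c(2) unfolding lower_density_def r1_def[symmetric] by (rule less_LiminfD)
  then obtain N where "\<forall>n\<ge>N. c < r1 A n" unfolding eventually_sequentially by auto
  then show ?thesis using c by (meson less_imp_le)
qed

lemma E2b: "c > 0 \<Longrightarrow> \<exists>N. \<forall>n\<ge>N. c \<le> r1 A n \<Longrightarrow> lower_density A > 0"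
proof -
  assume c: "c > 0" and ev: "\<exists>N. \<forall>n\<ge>N. c \<le> r1 A n"
  have "eventually (\<lambda>n. ereal c \<le> ereal (r1 A n)) sequentially"
    using ev unfolding eventually_sequentially by auto
  then have "ereal c \<le> lower_density A"
    unfolding lower_density_def r1_def[symmetric] by (rule Liminf_bounded)
  then show ?thesis using c by (metis ereal_less(2) order_less_le_trans)
qed

lemma E3b: "c > 0 \<Longrightarrow> \<forall>N. \<exists>n\<ge>N. \<exists>m. c \<le> rb A m n \<Longrightarrow> banach_upper A > 0"
proof (rule ccontr)
  assume c: "c > 0" and fr: "\<forall>N. \<exists>n\<ge>N. \<exists>m. c \<le> rb A m n" and "\<not> banach_upper A > 0"
  then have "banach_upper A < ereal c" by (simp add: not_less) (metis c ereal_less(2) order_le_less_trans)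
  then have "eventually (\<lambda>n. (SUP m. ereal (rb A m n)) < ereal c) sequentially"
    unfolding banach_upper_def rb_def[symmetric] by (rule Limsup_lessD)
  then obtain N where N: "\<forall>n\<ge>N. (SUP m. ereal (rb A m n)) < ereal c" unfolding eventually_sequentially by auto
  obtain n m where "n \<ge> N" "c \<le> rb A m n" using fr by blast
  moreover have "ereal (rb A m n) \<le> (SUP m. ereal (rb A m n))" by (rule SUP_upper) simp
  ultimately show False using N by (metis ereal_less_eq(3) leD order_trans)
qed

lemma E3c: "\<forall>c>0. \<exists>N. \<forall>n\<ge>N. \<forall>m. rb A m n \<le> c \<Longrightarrow> \<not> banach_upper A > 0"
proof
  assume H: "\<forall>c>0. \<exists>N. \<forall>n\<ge>N. \<forall>m. rb A m n \<le> c" and pos: "banach_upper A > 0"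
  obtain c where c: "0 < c" "ereal c < banach_upper A" using ereal_between[OF pos] by blast
  obtain N where N: "\<forall>n\<ge>N. \<forall>m. rb A m n \<le> c" using H c(1) by blast
  have "eventually (\<lambda>n. (SUP m. ereal (rb A m n)) \<le> ereal c) sequentially"
    unfolding eventually_sequentially using N by (intro exI[of _ N] allI impI SUP_least) auto
  then have "banach_upper A \<le> c" unfolding banach_upper_def rb_def[symmetric]
    by (rule Limsup_bounded)
  then show False using c by simp
qed

lemma E4: "\<forall>n\<ge>1. \<exists>m. A \<inter> {m+1..m+n} = {} \<Longrightarrow> \<not> banach_lower A > 0"
proof
  assume H: "\<forall>n\<ge>1. \<exists>m. A \<inter> {m+1..m+n} = {}" and pos: "banach_lower A > 0"
  have "eventually (\<lambda>n. (INF m. ereal (rb A m n)) \<le> 0) sequentially"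
    unfolding eventually_sequentially
  proof (intro exI[of _ 1] allI impI)
    fix n :: nat assume "n \<ge> 1"
    then obtain m where "A \<inter> {m+1..m+n} = {}" using H by blast
    then have "rb A m n = 0" by (simp add: rb_def)
    then show "(INF m. ereal (rb A m n)) \<le> 0" by (metis INF_lower UNIV_I zero_ereal_def)
  qed
  then have "Limsup sequentially (\<lambda>n. (INF m. ereal (rb A m n))) \<le> 0" by (rule Limsup_bounded)
  moreover have "banach_lower A \<le> Limsup sequentially (\<lambda>n. (INF m. ereal (rb A m n)))"
    unfolding banach_lower_def rb_def[symmetric] by (rule Liminf_le_Limsup) simp
  ultimately show False using pos by simp
qed


context tsetup begin

lemma T_notPiL: "T \<notin> PiL k L"
proof
  assume "T \<in> PiL k L"
  moreover have "is_prefix A1 T" unfolding is_prefix_def using T_A[of _ 0] by (simp add: a_def)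
  ultimately show False using A1nc by (auto simp: contained_def)
qed

lemma y_occ: "v \<in> PiL k L \<Longrightarrow> \<exists>q\<ge>1. \<forall>i<K. y (q + i) = v i"
proof -
  assume v: "v \<in> PiL k L"
  then have "v \<in> omega_shift k y" using y_omega by simp
  then have "\<forall>e>0. infinite (hits y (sball k v e))" unfolding omega_shift_def by blast
  then have "infinite (hits y (sball k v (1 / 2 ^ K)))" by simp
  then obtain q where "q \<in> hits y (sball k v (1 / 2 ^ K))" by (metis finite.emptyI ex_in_conv)
  then have "q \<in> Occ y v K" using hits_ball_sub by blast
  then show ?thesis by (auto simp: Occ_def)
qed

lemma a_add: "a (n + t) \<ge> a n + t"
proof (induction t)
  case 0 then show ?case by simp
next
  case (Suc t) then show ?case using a_Suc_gt[of "n + t"] by simp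
qed

lemma C_in_A: "n \<ge> 1 \<Longrightarrow> a (n - 1) + length (C n) \<le> a n"
proof -
  assume "n \<ge> 1"
  then obtain m where n: "n = Suc m" by (cases n) auto
  show ?thesis unfolding n using a_Suc[of m] by (simp add: cl_def)
qed

lemma T_word_occ:
  assumes w: "contained (PiL k L) w"
  shows "\<exists>q\<ge>N. q \<ge> 1 \<and> (\<forall>j<length w. T (q + j) = w ! j)"
proof -
  obtain n where n: "n \<ge> 1" "C n = w" using bij w unfolding bij_betw_def by (metis (no_types, lifting) atLeast_iff imageE mem_Collect_eq)
  obtain m0 where m0: "n - 1 = m0" by simp
  have nm: "n = Suc m0" using n m0 by simp
  define m where "m = N + n"
  have mn: "n \<le> m" by (simp add: m_def)
  define q where "q = a m - a n + a m0"
  have "q \<ge> a m - a n + 1" using a_pos[of m0] by (simp add: q_def)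
  have occ: "T (q + j) = w ! j" if j: "j < length w" for j
  proof -
    have lt: "a m0 + j < a n" using C_in_A[OF n(1)] j n(2) m0 by simp
    have "T (q + j) = T (a m - a n + (a m0 + j))" by (simp add: q_def add.assoc)
    also have "\<dots> = T (a m0 + j)" by (rule T_suffix[OF mn lt])
    also have "\<dots> = C (Suc m0) ! j" by (rule T_C) (use j n(2) nm in \<open>simp add: cl_def\<close>)
    finally show ?thesis using n(2) nm by simp
  qed
  have "q \<ge> N" using a_add[of n N] unfolding q_def m_def by (simp add: add.commute)
  then show ?thesis using occ \<open>q \<ge> a m - a n + 1\<close> by auto
qed

lemma infinite_unb: "(\<forall>N. \<exists>q\<ge>N. q \<in> S) \<Longrightarrow> infinite (S::nat set)"
  using infinite_nat_iff_unbounded_le by blast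

lemma PiL_sub_omegaT: "PiL k L \<subseteq> omega_shift k T"
proof
  fix z assume z: "z \<in> PiL k L"
  have zS: "z \<in> Sigma k" using z by (simp add: PiL_def)
  have "infinite (hits T (sball k z e))" if e: "e > 0" for e
  proof -
    obtain M where M: "1 / (2::real) ^ M < e" using exists_pow_small[OF e] by blast
    have w: "contained (PiL k L) (map z [0..<M])"
      unfolding contained_def is_prefix_def using z by (intro bexI[of _ z]) auto
    have "\<forall>N. \<exists>q\<ge>N. q \<in> Occ T z M"
    proof
      fix N
      obtain q where "q \<ge> N" "q \<ge> 1" "\<forall>j<length (map z [0..<M]). T (q + j) = map z [0..<M] ! j"
        using T_word_occ[OF w, of N] by blast
      then show "\<exists>q\<ge>N. q \<in> Occ T z M" by (intro exI[of _ q]) (auto simp: Occ_def)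
    qed
    then have "infinite (Occ T z M)" by (rule infinite_unb)
    moreover have "Occ T z M \<subseteq> hits T (sball k z e)" by (rule O_sub_hits[OF T_Sigma M])
    ultimately show ?thesis using finite_subset by blast
  qed
  then show "z \<in> omega_shift k T" using zS by (simp add: omega_shift_def)
qed

lemma T_in_omegaT: "T \<in> omega_shift k T"
proof -
  have "infinite (hits T (sball k T e))" if e: "e > 0" for e
  proof -
    obtain M where M: "1 / (2::real) ^ M < e" using exists_pow_small[OF e] by blast
    have "\<forall>N. \<exists>q\<ge>N. q \<in> Occ T T M"
    proof
      fix N
      define m where "m = M + Suc N"
      define q where "q = a m - a M"
      have mM: "M \<le> m" by (simp add: m_def)
      have qN: "q \<ge> Suc N" using a_add[of M "Suc N"] unfolding q_def m_def by simp
      have "T (q + i) = T i" if "i < M" for i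
      proof -
        have "i < a M" using that a_ge[of M] by simp
        then show ?thesis using T_suffix[OF mM] unfolding q_def by blast
      qed
      then have "q \<in> Occ T T M" using qN by (simp add: Occ_def)
      then show "\<exists>q\<ge>N. q \<in> Occ T T M" using qN by (intro exI[of _ q]) simp
    qed
    then have "infinite (Occ T T M)" by (rule infinite_unb)
    moreover have "Occ T T M \<subseteq> hits T (sball k T e)" by (rule O_sub_hits[OF T_Sigma M])
    ultimately show ?thesis using finite_subset by blast
  qed
  then show ?thesis using T_Sigma by (simp add: omega_shift_def)
qed

lemma omega_strict: "omega_shift k y \<subset> omega_shift k T"
  using PiL_sub_omegaT T_in_omegaT T_notPiL y_omega by blast

end

lemma v2_PiL: "k \<ge> 2 \<Longrightarrow> L \<ge> 3 \<Longrightarrow> (\<lambda>i. (i mod 4) div 2) \<in> PiL k L"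
proof -
  assume k: "k \<ge> 2" and L: "L \<ge> 3"
  have "\<not> (\<forall>j<L. ((i + j) mod 4) div 2 = (i mod 4) div 2)" for i
  proof
    assume H: "\<forall>j<L. ((i + j) mod 4) div 2 = (i mod 4) div 2"
    have "1 < L" "2 < L" using L by auto
    then have h1: "((i + 1) mod 4) div 2 = (i mod 4) div 2" and h2: "((i + 2) mod 4) div 2 = (i mod 4) div 2"
      using H by blast+
    have "i mod 4 = 0 \<or> i mod 4 = 1 \<or> i mod 4 = 2 \<or> i mod 4 = 3" by arith
    then show False
    proof (elim disjE)
      assume "i mod 4 = 0" then have "(i + 2) mod 4 = 2" by presburger
      then show False using h2 \<open>i mod 4 = 0\<close> by simp
    next
      assume "i mod 4 = 1" then have "(i + 1) mod 4 = 2" by presburger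
      then show False using h1 \<open>i mod 4 = 1\<close> by simp
    next
      assume "i mod 4 = 2" then have "(i + 2) mod 4 = 0" by presburger
      then show False using h2 \<open>i mod 4 = 2\<close> by simp
    next
      assume "i mod 4 = 3" then have "(i + 1) mod 4 = 0" by presburger
      then show False using h1 \<open>i mod 4 = 3\<close> by simp
    qed
  qed
  moreover have "(\<lambda>i. (i mod 4) div 2) \<in> Sigma k" using k by (auto simp: Sigma_def less_mult_imp_div_less)
  ultimately show ?thesis by (auto simp: PiL_def)
qed

lemma alt_shift_avoid:
  "\<not> (\<forall>i<4. ((q' + i) mod 4) div 2 = ((q::nat) + i) mod 2)"
proof
  assume H: "\<forall>i<4. ((q' + i) mod 4) div 2 = ((q::nat) + i) mod 2"
  have e: "((q' + j) mod 4) div 2 = ((q' mod 4 + j) mod 4) div 2" for j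
    by (simp add: mod_add_left_eq)
  have alt: "(q + j) mod 2 \<noteq> (q + Suc j) mod 2" for j by presburger
  have d: "((q' mod 4 + j) mod 4) div 2 \<noteq> ((q' mod 4 + Suc j) mod 4) div 2" if "j < 3" for j
  proof -
    have "((q' + j) mod 4) div 2 = (q + j) mod 2" using H that by simp
    moreover have "((q' + Suc j) mod 4) div 2 = (q + Suc j) mod 2" using H that by (simp del: add_Suc_right)
    ultimately show ?thesis using alt[of j] e[of j] e[of "Suc j"] by simp
  qed
  have "q' mod 4 < 4" by simp
  then have "q' mod 4 = 0 \<or> q' mod 4 = 1 \<or> q' mod 4 = 2 \<or> q' mod 4 = 3" by linarith
  then show False
  proof (elim disjE)
    assume c: "q' mod 4 = 0" show False using d[of 0] by (simp add: c)
  next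
    assume c: "q' mod 4 = 1" show False using d[of 1] by (simp add: c)
  next
    assume c: "q' mod 4 = 2" show False using d[of 0] by (simp add: c)
  next
    assume c: "q' mod 4 = 3" show False using d[of 1] by (simp add: c)
  qed
qed

lemma avoid_exists:
  assumes k: "k \<ge> 2" and L: "L \<ge> 3"
  shows "\<exists>v\<in>PiL k L. \<forall>q. \<not> (\<forall>i<4. v (q + i) = z i)"
proof (cases "\<exists>q. \<forall>i<4. z i = (q + i) mod 2")
  case True
  then obtain q where q: "\<forall>i<4. z i = (q + i) mod 2" by blast
  show ?thesis
  proof (intro bexI[of _ "\<lambda>i. (i mod 4) div 2"] allI notI)
    fix q' assume "\<forall>i<4. ((q' + i) mod 4) div 2 = z i"
    then have "\<forall>i<4. ((q' + i) mod 4) div 2 = (q + i) mod 2" using q by simp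
    then show False using alt_shift_avoid by blast
  qed (rule v2_PiL[OF k L])
next
  case False
  show ?thesis
  proof (intro bexI[of _ "\<lambda>i. i mod 2"] allI notI)
    fix q' assume "\<forall>i<4. (q' + i) mod 2 = z i"
    then show False using False by metis
  qed (rule alt_PiL[OF k L])
qed

lemma bl_zero:
  assumes "\<forall>q. \<not> (\<forall>i<M. v (q + i) = z i)"
    and "\<forall>K. \<exists>q\<ge>1. \<forall>i<K. x (q + i) = v i"
  shows "\<not> banach_lower (Occ x z M) > 0"
proof (rule E4, intro allI impI)
  fix n :: nat assume "n \<ge> 1"
  obtain q where q: "q \<ge> 1" "\<forall>i<n + M. x (q + i) = v i" using assms(2) by blast
  have "Occ x z M \<inter> {(q - 1) + 1..(q - 1) + n} = {}"
  proof (rule ccontr)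
    assume "Occ x z M \<inter> {(q - 1) + 1..(q - 1) + n} \<noteq> {}"
    then obtain p where p0: "p \<in> Occ x z M" "p \<in> {(q - 1) + 1..(q - 1) + n}" by blast
    then have p: "p \<in> Occ x z M" "q \<le> p" "p < q + n" using q(1) \<open>n \<ge> 1\<close> by auto
    define t where "t = p - q"
    have "\<forall>i<M. v (t + i) = z i"
    proof (intro allI impI)
      fix i assume i: "i < M"
      have "x (p + i) = z i" using p(1) i by (simp add: Occ_def)
      moreover have "x (q + (t + i)) = v (t + i)" using q(2) i p(3) t_def by simp
      moreover have "q + (t + i) = p + i" using p(2) t_def by simp
      ultimately show "v (t + i) = z i" by simp
    qed
    then show False using assms(1) by blast
  qed
  then show "\<exists>m. Occ x z M \<inter> {m + 1..m + n} = {}" by blast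
qed

context tsetup begin

lemma T_occ_PiL: "v \<in> PiL k L \<Longrightarrow> \<exists>q\<ge>1. \<forall>i<K. T (q + i) = v i"
proof -
  assume v: "v \<in> PiL k L"
  have w: "contained (PiL k L) (map v [0..<K])"
    unfolding contained_def is_prefix_def using v by (intro bexI[of _ v]) auto
  obtain q where "q \<ge> 0" "q \<ge> 1" "\<forall>j<length (map v [0..<K]). T (q + j) = map v [0..<K] ! j"
    using T_word_occ[OF w, of 0] by blast
  then show ?thesis by (intro exI[of _ q]) auto
qed

lemma bl_part:
  assumes "z \<in> Sigma k"
  shows "\<exists>M. \<not> banach_lower (Occ T z M) > 0 \<and> \<not> banach_lower (Occ y z M) > 0"
proof -
  obtain v where v: "v \<in> PiL k L" "\<forall>q. \<not> (\<forall>i<4. v (q + i) = z i)"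
    using avoid_exists[OF k2 L3] by blast
  have "\<not> banach_lower (Occ T z 4) > 0"
    by (rule bl_zero[OF v(2)]) (use T_occ_PiL[OF v(1)] in blast)
  moreover have "\<not> banach_lower (Occ y z 4) > 0"
    by (rule bl_zero[OF v(2)]) (use y_occ[OF v(1)] in blast)
  ultimately show ?thesis by blast
qed

end


lemma mod_add_small': "(i::nat) mod P + j < P \<Longrightarrow> (i + j) mod P = i mod P + j"
  by (metis mod_add_left_eq mod_less)

lemma mod_per: "i < P \<Longrightarrow> (t * P + i) mod P = (i::nat)" by simp

lemma periodic_norun:
  fixes P i :: nat and g :: "nat \<Rightarrow> nat"
  assumes P: "P > 0" and L: "L \<ge> 2" and g: "g (P - 1) \<noteq> g 0"
    and within: "\<forall>r. r + L \<le> P \<longrightarrow> (\<exists>j<L. g (r + j) \<noteq> g r)"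
  shows "\<exists>j<L. g ((i + j) mod P) \<noteq> g (i mod P)"
proof (cases "i mod P + L \<le> P")
  case True
  then obtain j where j: "j < L" "g (i mod P + j) \<noteq> g (i mod P)" using within by blast
  have "(i + j) mod P = i mod P + j" by (rule mod_add_small') (use True j(1) in linarith)
  then show ?thesis using j by auto
next
  case False
  define j0 where "j0 = P - 1 - i mod P"
  have r: "i mod P < P" using P by simp
  have j0L: "j0 + 1 < L" using False r unfolding j0_def by linarith
  have e1: "(i + j0) mod P = P - 1" using r unfolding j0_def by (subst mod_add_small') auto
  have "(i + (j0 + 1)) mod P = (i mod P + (j0 + 1)) mod P" by (rule mod_add_left_eq[symmetric])
  also have "i mod P + (j0 + 1) = P" using r unfolding j0_def by simp
  finally have e2: "(i + (j0 + 1)) mod P = 0" by simp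
  show ?thesis
  proof (cases "g (P - 1) = g (i mod P)")
    case True
    then show ?thesis using e2 g j0L by (intro exI[of _ "j0 + 1"]) auto
  next
    case False
    then show ?thesis using e1 j0L by (intro exI[of _ j0]) auto
  qed
qed

lemma periodic_PiL:
  assumes k: "k \<ge> 2" and L: "L \<ge> 3" and z: "z \<in> PiL k L" and M: "M \<ge> 1"
  shows "\<exists>P u. P > 0 \<and> u \<in> PiL k L \<and> (\<forall>t i. i < M \<longrightarrow> u (t * P + i) = z i)"
proof -
  have zk: "z i < k" for i using z by (auto simp: PiL_def Sigma_def)
  have zr: "\<exists>j<L. z (r + j) \<noteq> z r" for r using z by (auto simp: PiL_def)
  have L2: "L \<ge> 2" using L by simp
  show ?thesis
  proof (cases "z (M - 1) = z 0")
    case False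
    define g where "g r = z r" for r
    define u where "u i = g (i mod M)" for i
    have "u \<in> PiL k L"
    proof -
      have "\<exists>j<L. u (i + j) \<noteq> u i" for i
        unfolding u_def
      proof (rule periodic_norun)
        show "0 < M" using M by simp
        show "2 \<le> L" by fact
        show "g (M - 1) \<noteq> g 0" using False by (simp add: g_def)
        show "\<forall>r. r + L \<le> M \<longrightarrow> (\<exists>j<L. g (r + j) \<noteq> g r)" using zr by (simp add: g_def)
      qed
      moreover have "u \<in> Sigma k" using zk by (simp add: Sigma_def u_def g_def)
      ultimately show ?thesis by (auto simp: PiL_def)
    qed
    moreover have "\<forall>t i. i < M \<longrightarrow> u (t * M + i) = z i" by (simp add: u_def g_def)
    ultimately show ?thesis using M by (intro exI[of _ M] exI[of _ u]) auto
  next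
    case True
    define s where "s = (if z 0 = 0 then 1 else (0::nat))"
    have s: "s \<noteq> z 0" "s < k" using k by (auto simp: s_def)
    define g where "g r = (if r < M then z r else s)" for r
    define u where "u i = g (i mod Suc M)" for i
    have "u \<in> PiL k L"
    proof -
      have "\<exists>j<L. u (i + j) \<noteq> u i" for i
        unfolding u_def
      proof (rule periodic_norun)
        show "0 < Suc M" by simp
        show "2 \<le> L" by fact
        show "g (Suc M - 1) \<noteq> g 0" using s M by (simp add: g_def)
        show "\<forall>r. r + L \<le> Suc M \<longrightarrow> (\<exists>j<L. g (r + j) \<noteq> g r)"
        proof (intro allI impI)
          fix r assume rL: "r + L \<le> Suc M"
          show "\<exists>j<L. g (r + j) \<noteq> g r"
          proof (cases "r + L \<le> M")
            case True
            then obtain j where "j < L" "z (r + j) \<noteq> z r" using zr by blast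
            then show ?thesis using True by (intro exI[of _ j]) (auto simp: g_def)
          next
            case False
            then have rLe: "r + L = Suc M" using rL by simp
            have rM: "r < M" using rLe L by simp
            show ?thesis
            proof (cases "z r = s")
              case True
              have "r + (L - 2) = M - 1" using rLe L by simp
              then have "g (r + (L - 2)) = z (M - 1)" using M by (simp add: g_def)
              moreover have "L - 2 < L" using L by simp
              ultimately show ?thesis using True \<open>z (M - 1) = z 0\<close> s rM
                by (intro exI[of _ "L - 2"]) (auto simp: g_def)
            next
              case False
              have "r + (L - 1) = M" using rLe L by simp
              then show ?thesis using False rM L by (intro exI[of _ "L - 1"]) (auto simp: g_def)
            qed
          qed
        qed
      qed
      moreover have "u \<in> Sigma k" using zk s by (simp add: Sigma_def u_def g_def)
      ultimately show ?thesis by (auto simp: PiL_def)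
    qed
    moreover have "\<forall>t i. i < M \<longrightarrow> u (t * Suc M + i) = z i"
      using mod_per[of _ "Suc M"] by (simp add: u_def g_def del: mult_Suc_right)
    ultimately show ?thesis by (intro exI[of _ "Suc M"] exI[of _ u]) auto
  qed
qed

lemma count_periodic:
  assumes P: "P > 0" and per: "\<forall>t i. i < M \<longrightarrow> u (t * P + i) = z i"
    and x: "\<forall>j<N * P + M. x (q + j) = u j" and q: "q \<ge> 1"
  shows "N \<le> card (Occ x z M \<inter> {(q - 1) + 1..(q - 1) + N * P})"
proof -
  have sub: "(\<lambda>t. q + t * P) ` {..<N} \<subseteq> Occ x z M \<inter> {(q - 1) + 1..(q - 1) + N * P}"
  proof
    fix p assume "p \<in> (\<lambda>t. q + t * P) ` {..<N}"
    then obtain t where t: "t < N" "p = q + t * P" by blast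
    have "t * P + P \<le> N * P" using mult_le_mono1[of "Suc t" N P] t(1) by simp
    then have tP: "t * P + 1 \<le> N * P" using P by linarith
    have "\<forall>i<M. x (p + i) = z i"
    proof (intro allI impI)
      fix i assume i: "i < M"
      have "t * P + i < N * P + M" using tP i by linarith
      then have "x (q + (t * P + i)) = u (t * P + i)" using x by blast
      then show "x (p + i) = z i" using per i t(2) by (simp add: add.assoc)
    qed
    then show "p \<in> Occ x z M \<inter> {(q - 1) + 1..(q - 1) + N * P}"
      using t q tP by (auto simp: Occ_def)
  qed
  have "inj_on (\<lambda>t. q + t * P) {..<N}" using P by (auto simp: inj_on_def)
  then have "card ((\<lambda>t. q + t * P) ` {..<N}) = N" by (simp add: card_image)
  moreover have "finite (Occ x z M \<inter> {(q - 1) + 1..(q - 1) + N * P})" by simp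
  ultimately show ?thesis using card_mono[OF _ sub] by simp
qed

lemma bu_pos:
  assumes P: "P > 0" and per: "\<forall>t i. i < M \<longrightarrow> u (t * P + i) = z i"
    and occ: "\<forall>K. \<exists>q\<ge>1. \<forall>j<K. x (q + j) = u j"
  shows "banach_upper (Occ x z M) > 0"
proof (rule E3b[of "1 / real P"])
  show "0 < 1 / real P" using P by simp
  show "\<forall>N. \<exists>n\<ge>N. \<exists>m. 1 / real P \<le> rb (Occ x z M) m n"
  proof
    fix N0
    define N where "N = Suc N0"
    obtain q where q: "q \<ge> 1" "\<forall>j<N * P + M. x (q + j) = u j" using occ by blast
    have c: "N \<le> card (Occ x z M \<inter> {(q - 1) + 1..(q - 1) + N * P})"
      by (rule count_periodic[OF P per q(2) q(1)])
    have "N \<le> N * P" using P by simp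
    then have "N * P \<ge> N0" unfolding N_def by linarith
    moreover have "1 / real P \<le> rb (Occ x z M) (q - 1) (N * P)"
    proof -
      have "N * P > 0" using P by (simp add: N_def)
      then have pos: "real (N * P) > 0" by (simp only: of_nat_0_less_iff)
      have "1 / real P = real N / real (N * P)" using P pos by (simp add: N_def field_simps)
      also have "\<dots> \<le> real (card (Occ x z M \<inter> {(q - 1) + 1..(q - 1) + N * P})) / real (N * P)"
        using c pos by (intro divide_right_mono) auto
      finally show ?thesis by (simp add: rb_def)
    qed
    ultimately show "\<exists>n\<ge>N0. \<exists>m. 1 / real P \<le> rb (Occ x z M) m n" by blast
  qed
qed

lemma Occ_mono: "M \<le> M' \<Longrightarrow> Occ x z M' \<subseteq> Occ x z M"
  by (auto simp: Occ_def)

context tsetup begin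

lemma bu_PiL:
  assumes z: "z \<in> PiL k L"
  shows "banach_upper (Occ T z M) > 0 \<and> banach_upper (Occ y z M) > 0"
proof -
  obtain P u where Pu: "P > 0" "u \<in> PiL k L" "\<forall>t i. i < max M 1 \<longrightarrow> u (t * P + i) = z i"
    using periodic_PiL[OF k2 L3 z, of "max M 1"] by auto
  have "banach_upper (Occ T z (max M 1)) > 0"
    by (rule bu_pos[OF Pu(1) Pu(3)]) (use T_occ_PiL[OF Pu(2)] in blast)
  moreover have "banach_upper (Occ y z (max M 1)) > 0"
    by (rule bu_pos[OF Pu(1) Pu(3)]) (use y_occ[OF Pu(2)] in blast)
  moreover have "banach_upper (Occ x z (max M 1)) \<le> banach_upper (Occ x z M)" for x
    using mono_bu Occ_mono[of M "max M 1"] unfolding monoset_def by simp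
  ultimately show ?thesis by (meson order_less_le_trans)
qed

lemma notPiL_run: "z \<in> Sigma k \<Longrightarrow> z \<notin> PiL k L \<Longrightarrow> \<exists>i. \<forall>j<L. z (i + j) = z i"
  by (auto simp: PiL_def)

lemma bu_y_notPiL:
  assumes "z \<in> Sigma k" "z \<notin> PiL k L"
  shows "\<exists>M. \<not> banach_upper (Occ y z M) > 0"
proof -
  obtain i where i: "\<forall>j<L. z (i + j) = z i" using notPiL_run[OF assms] by blast
  have "Occ y z (i + L) = {}"
  proof (rule ccontr)
    assume "Occ y z (i + L) \<noteq> {}"
    then obtain q where q: "\<forall>j<i + L. y (q + j) = z j" by (auto simp: Occ_def)
    have "\<forall>j<L. y (q + i + j) = y (q + i)"
    proof (intro allI impI)
      fix j assume "j < L"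
      then have "y (q + (i + j)) = z (i + j)" "y (q + (i + 0)) = z (i + 0)" using q L3 by auto
      then show "y (q + i + j) = y (q + i)" using i \<open>j < L\<close> by (simp add: add.assoc)
    qed
    then show False using PiL_norun[OF yPiL, of "q + i"] by auto
  qed
  then have "\<not> banach_upper (Occ y z (i + L)) > 0" by (intro E3c) (auto simp: rb_def)
  then show ?thesis by blast
qed

end

definition cntS :: "nat set \<Rightarrow> nat \<Rightarrow> nat" where
  "cntS S t = card (S \<inter> {..<t})"

lemma cntS_add: "cntS S (b + n) = cntS S b + card (S \<inter> {b..<b+n})"
proof -
  have "S \<inter> {..<b+n} = (S \<inter> {..<b}) \<union> (S \<inter> {b..<b+n})" by auto
  moreover have "(S \<inter> {..<b}) \<inter> (S \<inter> {b..<b+n}) = {}" by auto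
  ultimately show ?thesis unfolding cntS_def by (simp add: card_Un_disjoint)
qed

lemma cntS_mono: "t \<le> t' \<Longrightarrow> cntS S t \<le> cntS S t'"
  unfolding cntS_def by (intro card_mono) auto

lemma card_win_le: "card (S \<inter> {b..<b+n}) \<le> n"
  by (metis card_atLeastLessThan add_diff_cancel_left' card_mono finite_atLeastLessThan inf_le2)

lemma cntS_diff: "t \<le> t' \<Longrightarrow> cntS S t' \<le> cntS S t + (t' - t)"
  using cntS_add[of S t "t' - t"] card_win_le[of S t "t' - t"] by simp

lemma r1_cnt: "0 \<notin> S \<Longrightarrow> r1 S t = real (cntS S (Suc t)) / real t"
proof -
  assume "0 \<notin> S"
  then have "S \<inter> {1..t} = S \<inter> {..<Suc t}" by (auto simp: Suc_le_eq) (metis gr0I)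
  then show ?thesis by (simp add: r1_def cntS_def)
qed

locale tz = tsetup +
  fixes z :: "nat \<Rightarrow> nat" and M :: nat
begin

definition "OT = Occ T z M"
definition "Oy = Occ y z M"
definition "f n = card (Oy \<inter> {1..n})"
definition "G t = cntS OT t"

lemma s_pos: "s m \<ge> 1" using a_pos[of m] by (simp add: s_def)

lemma block_mem:
  assumes t0: "t0 < (a m)^2" and r: "r \<ge> 1" "r + M \<le> Suc m"
  shows "s m + t0 * Suc m + r \<in> OT \<longleftrightarrow> r \<in> Oy"
proof -
  have "T (s m + t0 * Suc m + r + i) = y (r + i)" if "i < M" for i
    using T_Y[OF t0, of "r + i"] that r by (simp add: add.assoc)
  then show ?thesis using r s_pos[of m] by (auto simp: OT_def Oy_def Occ_def)
qed

lemma block_upper: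
  assumes t0: "t0 < (a m)^2"
  shows "card (OT \<inter> {s m + t0 * Suc m..<s m + t0 * Suc m + Suc m}) \<le> f (Suc m) + M + 1"
proof -
  let ?b = "s m + t0 * Suc m" and ?n = "Suc m"
  have sub: "OT \<inter> {?b..<?b + ?n} \<subseteq> (\<lambda>r. ?b + r) ` ((Oy \<inter> {1..?n}) \<union> {0} \<union> {?n - M..<?n})"
  proof
    fix q assume q: "q \<in> OT \<inter> {?b..<?b + ?n}"
    define r where "r = q - ?b"
    have qr: "q = ?b + r" "r < ?n" using q by (auto simp: r_def)
    have "r \<in> (Oy \<inter> {1..?n}) \<union> {0} \<union> {?n - M..<?n}"
    proof (cases "r = 0 \<or> r + M > ?n")
      case True then show ?thesis using qr(2) by auto
    next
      case False
      then have "r \<ge> 1" "r + M \<le> ?n" by auto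
      then have "r \<in> Oy" using block_mem[OF t0] q qr(1) by auto
      then show ?thesis using qr(2) \<open>r \<ge> 1\<close> by auto
    qed
    then show "q \<in> (\<lambda>r. ?b + r) ` ((Oy \<inter> {1..?n}) \<union> {0} \<union> {?n - M..<?n})" using qr(1) by blast
  qed
  have "card (OT \<inter> {?b..<?b + ?n}) \<le> card ((Oy \<inter> {1..?n}) \<union> {0} \<union> {?n - M..<?n})"
    using card_mono[OF _ sub] card_image_le[of "(Oy \<inter> {1..?n}) \<union> {0} \<union> {?n - M..<?n}" "\<lambda>r. ?b + r"]
    by (meson finite_Un finite_atLeastLessThan finite_imageI finite_Int finite_atLeastAtMost finite.insertI finite.emptyI le_trans)
  also have "\<dots> \<le> card (Oy \<inter> {1..?n}) + card ({0::nat}) + card {?n - M..<?n}"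
    by (meson card_Un_le le_trans add_le_mono1)
  also have "\<dots> \<le> f ?n + 1 + M" by (simp add: f_def)
  finally show ?thesis by simp
qed

lemma block_lower:
  assumes t0: "t0 < (a m)^2"
  shows "card (OT \<inter> {s m + t0 * Suc m..<s m + t0 * Suc m + Suc m}) \<ge> f (Suc m) - Suc M"
proof -
  let ?b = "s m + t0 * Suc m" and ?n = "Suc m"
  have sub: "(\<lambda>r. ?b + r) ` (Oy \<inter> {1..?n - Suc M}) \<subseteq> OT \<inter> {?b..<?b + ?n}"
  proof
    fix q assume "q \<in> (\<lambda>r. ?b + r) ` (Oy \<inter> {1..?n - Suc M})"
    then obtain r where r: "r \<in> Oy" "1 \<le> r" "r \<le> ?n - Suc M" "q = ?b + r" by auto
    then have "r + M \<le> ?n" "r < ?n" by linarith+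
    then show "q \<in> OT \<inter> {?b..<?b + ?n}" using block_mem[OF t0 r(2)] r by auto
  qed
  have "card ((\<lambda>r. ?b + r) ` (Oy \<inter> {1..?n - Suc M})) = card (Oy \<inter> {1..?n - Suc M})"
    by (rule card_image) (auto simp: inj_on_def)
  then have c1: "card (Oy \<inter> {1..?n - Suc M}) \<le> card (OT \<inter> {?b..<?b + ?n})"
    using card_mono[OF _ sub] by simp
  have "Oy \<inter> {1..?n} \<subseteq> (Oy \<inter> {1..?n - Suc M}) \<union> {?n - Suc M<..?n}" by auto
  then have "f ?n \<le> card ((Oy \<inter> {1..?n - Suc M}) \<union> {?n - Suc M<..?n})" unfolding f_def
    by (intro card_mono) auto
  also have "\<dots> \<le> card (Oy \<inter> {1..?n - Suc M}) + card {?n - Suc M<..?n}" by (rule card_Un_le)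
  also have "card {?n - Suc M<..?n} \<le> Suc M" by simp
  finally show ?thesis using c1 by linarith
qed

lemma blocks_upper:
  "p \<le> (a m)^2 \<Longrightarrow> G (s m + p * Suc m) \<le> G (s m) + p * (f (Suc m) + M + 1)"
proof (induction p)
  case 0 then show ?case by simp
next
  case (Suc p)
  have "G (s m + Suc p * Suc m) = G (s m + p * Suc m) + card (OT \<inter> {s m + p * Suc m..<s m + p * Suc m + Suc m})"
    unfolding G_def by (metis cntS_add add.assoc mult_Suc add.commute)
  also have "\<dots> \<le> G (s m + p * Suc m) + (f (Suc m) + M + 1)"
    using block_upper[of p m] Suc.prems by simp
  finally show ?case using Suc by simp
qed

lemma blocks_lower:
  "p \<le> (a m)^2 \<Longrightarrow> G (s m + p * Suc m) \<ge> G (s m) + p * (f (Suc m) - Suc M)"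
proof (induction p)
  case 0 then show ?case by simp
next
  case (Suc p)
  have "G (s m + Suc p * Suc m) = G (s m + p * Suc m) + card (OT \<inter> {s m + p * Suc m..<s m + p * Suc m + Suc m})"
    unfolding G_def by (metis cntS_add add.assoc mult_Suc add.commute)
  also have "\<dots> \<ge> G (s m + p * Suc m) + (f (Suc m) - Suc M)"
    using block_lower[of p m] Suc.prems by simp
  finally show ?case using Suc by simp
qed

end

context tsetup begin

lemma a_sq: "a m \<ge> m * m"
proof (induction m)
  case 0 then show ?case by simp
next
  case (Suc m)
  have "Suc m \<le> a m" using a_ge[of m] by simp
  then have "Suc m * Suc m \<le> a m * a m" using mult_le_mono by blast
  also have "\<dots> \<le> Suc m * (a m)^2" by (simp add: power2_eq_square)
  also have "\<dots> \<le> a (Suc m)" by (rule a_Suc_ge2)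
  finally show ?case .
qed

lemma a_Suc_split: "a (Suc m) = s m + Suc m * (a m)^2 + a m"
  by (simp add: a_Suc s_def)

lemma a_le_sq: "a m \<le> (a m)^2" by (simp add: power2_eq_square)

lemma cl_small: "\<epsilon> > 0 \<Longrightarrow> \<exists>m0. \<forall>m\<ge>m0. real (cl m) \<le> \<epsilon> * real (a m)"
proof -
  assume e: "\<epsilon> > 0"
  have "eventually (\<lambda>m. dist (real (length (C (Suc m))) / real (length (A m))) 0 < \<epsilon>) sequentially"
    using lim e by (rule tendstoD)
  then obtain m0 where m0: "\<forall>m\<ge>m0. real (cl m) / real (a m) < \<epsilon>"
    unfolding eventually_sequentially by (auto simp: cl_def a_def)
  have "real (cl m) \<le> \<epsilon> * real (a m)" if "m \<ge> m0" for m
  proof -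
    have "real (a m) > 0" using a_pos[of m] by simp
    then show ?thesis using m0 that by (simp add: divide_less_eq less_imp_le)
  qed
  then show ?thesis by blast
qed

lemma cl_le_a: "\<exists>m0. \<forall>m\<ge>m0. cl m \<le> a m"
proof -
  obtain m0 where "\<forall>m\<ge>m0. real (cl m) \<le> 1 * real (a m)" using cl_small[of 1] by auto
  then show ?thesis by auto
qed

lemma a_Suc_le4: "cl m \<le> a m \<Longrightarrow> a (Suc m) \<le> 4 * Suc m * (a m)^2"
proof -
  assume "cl m \<le> a m"
  then have "a (Suc m) \<le> 3 * a m + Suc m * (a m)^2" by (simp add: a_Suc)
  also have "\<dots> \<le> 3 * (Suc m * (a m)^2) + Suc m * (a m)^2"
    using a_le_sq[of m] by (intro add_mono mult_le_mono2) (auto intro: le_trans[OF _ mult_le_mono1[of 1]])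
  finally show ?thesis by (simp add: algebra_simps)
qed

lemma level_exists:
  assumes "a m1 \<le> t"
  shows "\<exists>m\<ge>m1. a m \<le> t \<and> t < a (Suc m)"
proof -
  have ex: "\<exists>j. t < a j" using a_ge[of t] by (intro exI[of _ t]) simp
  define j where "j = (LEAST j. t < a j)"
  have j: "t < a j" unfolding j_def by (rule LeastI_ex[OF ex])
  have jmin: "\<And>i. t < a i \<Longrightarrow> j \<le> i" unfolding j_def by (rule Least_le)
  have "j \<noteq> 0"
  proof
    assume "j = 0"
    then have "t < a 0" using j by simp
    moreover have "a 0 \<le> a m1" using a_mono[of 0 m1] by simp
    ultimately show False using assms by simp
  qed
  then obtain m where jm: "j = Suc m" by (cases j) auto
  have "a m \<le> t"
  proof (rule ccontr)
    assume "\<not> a m \<le> t"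
    then have "t < a m" by simp
    then have "j \<le> m" by (rule jmin)
    then show False using jm by simp
  qed
  moreover have "m \<ge> m1"
  proof (rule ccontr)
    assume "\<not> m \<ge> m1"
    then have "Suc m \<le> m1" by simp
    then have "a j \<le> a m1" using jm a_mono by simp
    then show False using j assms by simp
  qed
  ultimately show ?thesis using j jm by blast
qed

end

context tz begin

lemma zero_notin_OT: "0 \<notin> OT" by (simp add: OT_def Occ_def)
lemma zero_notin_Oy: "0 \<notin> Oy" by (simp add: Oy_def Occ_def)

lemma r1_Oy: "r1 Oy n = real (f n) / real n" by (simp add: r1_def f_def)
lemma r1_OT: "r1 OT t = real (G (Suc t)) / real t"
  using r1_cnt[OF zero_notin_OT] by (simp add: G_def)

lemma G_mono: "t \<le> t' \<Longrightarrow> G t \<le> G t'" unfolding G_def by (rule cntS_mono)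
lemma G_diff: "t \<le> t' \<Longrightarrow> G t' \<le> G t + (t' - t)" unfolding G_def by (rule cntS_diff)
lemma G_le: "G t \<le> t" using G_diff[of 0 t] by (simp add: G_def cntS_def)

lemma G_block_low: "real (G (s m + Suc m * (a m)^2)) \<ge> real ((a m)^2) * (real (f (Suc m)) - real (Suc M))"
proof -
  have "G (s m + (a m)^2 * Suc m) \<ge> G (s m) + (a m)^2 * (f (Suc m) - Suc M)"
    by (rule blocks_lower) simp
  then have "G (s m + Suc m * (a m)^2) \<ge> (a m)^2 * (f (Suc m) - Suc M)" by (simp add: mult.commute)
  then have "real (G (s m + Suc m * (a m)^2)) \<ge> real ((a m)^2 * (f (Suc m) - Suc M))"
    by (simp only: of_nat_le_iff)
  then have "real (G (s m + Suc m * (a m)^2)) \<ge> real ((a m)^2) * real (f (Suc m) - Suc M)"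
    by (simp only: of_nat_mult)
  moreover have "real (f (Suc m) - Suc M) \<ge> real (f (Suc m)) - real (Suc M)" by linarith
  moreover have "real ((a m)^2) \<ge> 0" by simp
  ultimately show ?thesis using mult_left_mono order_trans by blast
qed

lemma UD1:
  assumes c: "c > 0" and fr: "\<forall>N. \<exists>n\<ge>N. c \<le> r1 Oy n"
  shows "\<forall>N. \<exists>t\<ge>N. c / 8 \<le> r1 OT t"
proof
  fix N
  obtain m0 where m0: "\<forall>m\<ge>m0. cl m \<le> a m" using cl_le_a by blast
  obtain K :: nat where K: "2 * (real M + 1) / c < K" using reals_Archimedean2 by blast
  obtain n where n: "n \<ge> N + m0 + K + 1" "c \<le> r1 Oy n" using fr by blast
  define m where "m = n - 1"
  have nm: "n = Suc m" using n(1) by (simp add: m_def)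
  have mm0: "m \<ge> m0" using n(1) by (simp add: m_def)
  have npos: "real n > 0" using nm by simp
  have fn: "real (f n) \<ge> c * real n"
    using n(2) npos by (simp add: r1_Oy pos_le_divide_eq)
  have "real K \<le> real n" using n(1) by simp
  then have "2 * (real M + 1) / c < real n" using K by linarith
  then have cn: "2 * (real M + 1) < c * real n" using c by (simp add: divide_less_eq mult.commute)
  define t where "t = s m + n * (a m)^2"
  define A2 where "A2 = real ((a m)^2)"
  have A2pos: "A2 > 0" using a_pos[of m] by (simp add: A2_def)
  have Gt: "real (G t) \<ge> A2 * (real (f n) - real (Suc M))"
    using G_block_low[of m] by (simp add: t_def A2_def nm)
  have "real (f n) - real (Suc M) \<ge> c * real n / 2" using fn cn by simp
  then have "A2 * (c * real n / 2) \<le> A2 * (real (f n) - real (Suc M))"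
    using A2pos by (intro mult_left_mono) auto
  then have "real (G t) \<ge> A2 * (c * real n / 2)" using Gt by linarith
  moreover have "G t \<le> G (Suc t)" by (rule G_mono) simp
  ultimately have G1: "real (G (Suc t)) \<ge> A2 * (c * real n / 2)" by linarith
  have "t \<le> a (Suc m)" by (simp add: t_def a_Suc_split nm)
  also have "\<dots> \<le> 4 * Suc m * (a m)^2" using m0 mm0 a_Suc_le4 by blast
  finally have "real t \<le> real (4 * Suc m * (a m)^2)" by (simp only: of_nat_le_iff)
  then have "real t \<le> 4 * real n * A2" unfolding A2_def nm by simp
  have "1 \<le> (a m)^2" using a_pos[of m] by simp
  then have "n * 1 \<le> n * (a m)^2" by (rule mult_le_mono2)
  then have tn: "t \<ge> n" unfolding t_def by linarith
  then have tpos: "real t > 0" using npos by linarith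
  have "c / 8 * real t \<le> c / 8 * (4 * real n * A2)" using \<open>real t \<le> 4 * real n * A2\<close> c by (intro mult_left_mono) auto
  also have "\<dots> = A2 * (c * real n / 2)" by simp
  also have "\<dots> \<le> real (G (Suc t))" by (rule G1)
  finally have "c / 8 \<le> real (G (Suc t)) / real t" using tpos by (simp add: pos_le_divide_eq)
  then have "c / 8 \<le> r1 OT t" by (simp add: r1_OT)
  moreover have "t \<ge> N" using tn n(1) by simp
  ultimately show "\<exists>t\<ge>N. c / 8 \<le> r1 OT t" by blast
qed


lemma G_block_up: "G (s m + Suc m * (a m)^2) \<le> s m + (a m)^2 * (f (Suc m) + M + 1)"
proof -
  have "G (s m + (a m)^2 * Suc m) \<le> G (s m) + (a m)^2 * (f (Suc m) + M + 1)"
    by (rule blocks_upper) simp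
  moreover have "G (s m) \<le> s m" by (rule G_le)
  ultimately show ?thesis by (simp add: mult.commute)
qed

lemma LD2:
  assumes c: "c > 0" and fr: "\<forall>N. \<exists>n\<ge>N. r1 Oy n < c / 2"
  shows "\<forall>N. \<exists>t\<ge>N. r1 OT t < c"
proof
  fix N
  obtain m0 where m0: "\<forall>m\<ge>m0. cl m \<le> a m" using cl_le_a by blast
  obtain K :: nat where K: "2 * (real M + 4) / c < K" using reals_Archimedean2 by blast
  obtain n where n: "n \<ge> N + m0 + K + 1" "r1 Oy n < c / 2" using fr by blast
  define m where "m = n - 1"
  have nm: "n = Suc m" using n(1) by (simp add: m_def)
  have mm0: "m \<ge> m0" using n(1) by (simp add: m_def)
  have npos: "real n > 0" using nm by simp
  have fn: "real (f n) < c / 2 * real n"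
    using n(2) npos by (simp add: r1_Oy divide_less_eq)
  have "real K \<le> real n" using n(1) by simp
  then have "2 * (real M + 4) / c < real n" using K by linarith
  then have cn: "2 * (real M + 4) < c * real n" using c by (simp add: divide_less_eq mult.commute)
  define t where "t = s m + n * (a m)^2"
  define A2 where "A2 = real ((a m)^2)"
  have A2pos: "A2 \<ge> 1" using a_pos[of m] by (simp add: A2_def)
  have "G (Suc t) \<le> G t + 1" using G_diff[of t "Suc t"] by simp
  also have "G t \<le> s m + (a m)^2 * (f n + M + 1)" using G_block_up[of m] by (simp add: t_def nm)
  finally have G1: "G (Suc t) \<le> s m + (a m)^2 * (f n + M + 1) + 1" by simp
  have "cl m \<le> a m" using m0 mm0 by blast
  then have "s m + 1 \<le> 3 * (a m)^2"
    using a_le_sq[of m] a_pos[of m] by (simp add: s_def)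
  with G1 have "G (Suc t) \<le> (a m)^2 * (f n + M + 4)" by (simp add: algebra_simps)
  then have "real (G (Suc t)) \<le> real ((a m)^2 * (f n + M + 4))" by (simp only: of_nat_le_iff)
  then have G2: "real (G (Suc t)) \<le> A2 * (real (f n) + real M + 4)" by (simp add: A2_def)
  have "A2 * (real (f n) + real M + 4) < A2 * (c * real n)"
    using fn cn A2pos by (intro mult_strict_left_mono) auto
  also have "\<dots> \<le> c * real t"
  proof -
    have "real t \<ge> real n * A2" by (simp add: t_def A2_def)
    then show ?thesis using c by (simp add: mult.commute mult.left_commute mult_left_mono)
  qed
  finally have "real (G (Suc t)) < c * real t" using G2 by linarith
  moreover have tn: "t \<ge> n"
  proof -
    have "1 \<le> (a m)^2" using a_pos[of m] by simp
    then have "n * 1 \<le> n * (a m)^2" by (rule mult_le_mono2)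
    then show ?thesis unfolding t_def by linarith
  qed
  moreover have "real t > 0" using tn npos by linarith
  ultimately have "r1 OT t < c" by (simp add: r1_OT divide_less_eq)
  moreover have "t \<ge> N" using tn n(1) by simp
  ultimately show "\<exists>t\<ge>N. r1 OT t < c" by blast
qed


lemma regions:
  assumes "a m \<le> t"
  shows "t \<le> s m \<or> (\<exists>p r. p < (a m)^2 \<and> r < Suc m \<and> t = s m + p * Suc m + r)
         \<or> s m + Suc m * (a m)^2 \<le> t"
proof -
  consider "t \<le> s m" | "s m < t" "t < s m + Suc m * (a m)^2" | "s m + Suc m * (a m)^2 \<le> t" by linarith
  then show ?thesis
  proof cases
    case 2
    define p where "p = (t - s m) div Suc m"
    define r where "r = (t - s m) mod Suc m"
    have "t - s m = p * Suc m + r" unfolding p_def r_def by (rule div_mult_mod_eq[symmetric])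
    then have e: "t = s m + p * Suc m + r" using 2 by simp
    have "p * Suc m < (a m)^2 * Suc m" using e 2 by (simp add: mult.commute)
    then have "p < (a m)^2" by (metis mult_less_cancel2)
    moreover have "r < Suc m" by (simp add: r_def)
    ultimately show ?thesis using e by blast
  qed auto
qed

lemma UD2:
  assumes H: "\<forall>\<epsilon>>0. \<exists>N. \<forall>n\<ge>N. real (f n) \<le> \<epsilon> * real n"
  shows "\<forall>\<delta>>0. \<exists>N. \<forall>t\<ge>N. r1 OT t \<le> \<delta>"
proof (intro allI impI)
  fix \<delta> :: real assume \<delta>: "\<delta> > 0"
  define \<epsilon> where "\<epsilon> = \<delta> / 12"
  have e: "\<epsilon> > 0" using \<delta> by (simp add: \<epsilon>_def)
  obtain n0 where n0: "\<forall>n\<ge>n0. real (f n) \<le> \<epsilon> * real n" using H e by blast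
  obtain m0 where m0: "\<forall>m\<ge>m0. real (cl m) \<le> \<epsilon> * real (a m)" using cl_small[OF e] by blast
  obtain m0a where m0a: "\<forall>m\<ge>m0a. cl m \<le> a m" using cl_le_a by blast
  obtain K :: nat where K: "(real M + 4) / \<epsilon> + 2 / \<epsilon> < K" using reals_Archimedean2 by blast
  define m1 where "m1 = n0 + m0 + m0a + K + 1"
  have Kn: "real M + 4 \<le> \<epsilon> * real n \<and> 2 \<le> \<epsilon> * real n" if "n \<ge> K" for n
  proof -
    have nn: "real K \<le> real n" using that by simp
    have "(real M + 4) / \<epsilon> \<ge> 0" "2 / \<epsilon> \<ge> 0" using e by auto
    then have "(real M + 4) / \<epsilon> < real n" "2 / \<epsilon> < real n" using K nn by linarith+
    then show ?thesis using e by (simp add: divide_less_eq mult.commute less_imp_le)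
  qed
  have stepA: "real (G (a (Suc m))) \<le> 2 * \<epsilon> * real (a (Suc m))" if m: "m \<ge> m1" for m
  proof -
    define n where "n = Suc m"
    define A2 where "A2 = real ((a m)^2)"
    have "G (a (Suc m)) \<le> G (s m + Suc m * (a m)^2) + a m"
      using G_diff[of "s m + Suc m * (a m)^2" "a (Suc m)"] by (simp add: a_Suc_split)
    also have "\<dots> \<le> s m + (a m)^2 * (f (Suc m) + M + 1) + a m" using G_block_up by simp
    also have "cl m \<le> a m" using m0a m unfolding m1_def by simp
    then have "s m + a m \<le> 3 * (a m)^2"
      using a_le_sq[of m] unfolding s_def by linarith
    then have "s m + (a m)^2 * (f (Suc m) + M + 1) + a m \<le> (a m)^2 * (f n + M + 4)"
      by (simp add: algebra_simps n_def)
    finally have "real (G (a (Suc m))) \<le> real ((a m)^2 * (f n + M + 4))" by (simp only: of_nat_le_iff)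
    then have G1: "real (G (a (Suc m))) \<le> A2 * (real (f n) + real M + 4)" by (simp add: A2_def)
    have "n \<ge> n0" "n \<ge> K" using m by (auto simp: m1_def n_def)
    then have "real (f n) + real M + 4 \<le> 2 * \<epsilon> * real n" using n0 Kn by fastforce
    then have "A2 * (real (f n) + real M + 4) \<le> A2 * (2 * \<epsilon> * real n)"
      by (intro mult_left_mono) (auto simp: A2_def)
    also have "\<dots> \<le> 2 * \<epsilon> * real (a (Suc m))"
    proof -
      have "real n * A2 \<le> real (a (Suc m))" using a_Suc_ge2[of m] unfolding A2_def n_def
        by (metis of_nat_le_iff of_nat_mult)
      then show ?thesis using e by (simp add: algebra_simps mult_left_mono)
    qed
    finally show ?thesis using G1 by linarith
  qed
  have stepB: "real (G t) \<le> 6 * \<epsilon> * real t" if m: "m \<ge> Suc m1" and t: "a m \<le> t" "t \<le> a (Suc m)" for m t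
  proof -
    obtain m' where m': "m = Suc m'" "m' \<ge> m1" using m by (cases m) auto
    have gam: "real (G (a m)) \<le> 2 * \<epsilon> * real (a m)" using stepA[OF m'(2)] m'(1) by simp
    have clm: "real (cl m) \<le> \<epsilon> * real (a m)" using m0 m unfolding m1_def by simp
    have am_t: "real (a m) \<le> real t" using t by simp
    consider "t \<le> s m" | p r where "p < (a m)^2" "r < Suc m" "t = s m + p * Suc m + r"
      | "s m + Suc m * (a m)^2 \<le> t" using regions[OF t(1)] by blast
    then show ?thesis
    proof cases
      case 1
      have "G t \<le> G (a m) + (t - a m)" using G_diff t(1) by blast
      also have "t - a m \<le> cl m" using 1 by (simp add: s_def)
      finally have "real (G t) \<le> real (G (a m)) + real (cl m)" by simp
      also have "\<dots> \<le> 3 * \<epsilon> * real (a m)" using gam clm by simp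
      also have "\<dots> \<le> 6 * \<epsilon> * real t" using am_t e by (simp add: mult_left_mono)
      finally show ?thesis .
    next
      case (2 p r)
      have "G t \<le> G (s m + p * Suc m) + r" using G_diff[of "s m + p * Suc m" t] 2 by simp
      also have "G (s m + p * Suc m) \<le> G (s m) + p * (f (Suc m) + M + 1)"
        using blocks_upper 2(1) by simp
      also have "G (s m) \<le> G (a m) + cl m" using G_diff[of "a m" "s m"] by (simp add: s_def)
      finally have "G t \<le> G (a m) + cl m + p * (f (Suc m) + M + 1) + r" by simp
      then have "real (G t) \<le> real (G (a m) + cl m + p * (f (Suc m) + M + 1) + r)"
        by (simp only: of_nat_le_iff)
      then have "real (G t) \<le> real (G (a m)) + real (cl m) + real p * (real (f (Suc m)) + real M + 1) + real r"
        by (simp only: of_nat_add of_nat_mult of_nat_1)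
      moreover have "real p * (real (f (Suc m)) + real M + 1) \<le> 2 * \<epsilon> * real t"
      proof -
        have "Suc m \<ge> n0" "Suc m \<ge> K" using m by (auto simp: m1_def)
        then have "real (f (Suc m)) + real M + 1 \<le> 2 * \<epsilon> * real (Suc m)" using n0 Kn by fastforce
        then have "real p * (real (f (Suc m)) + real M + 1) \<le> real p * (2 * \<epsilon> * real (Suc m))"
          by (intro mult_left_mono) auto
        also have "\<dots> = 2 * \<epsilon> * real (p * Suc m)" by (simp add: algebra_simps)
        also have "\<dots> \<le> 2 * \<epsilon> * real t" using e 2(3) by (intro mult_left_mono) auto
        finally show ?thesis .
      qed
      moreover have "real r \<le> \<epsilon> * real t"
      proof -
        have "m \<ge> K" using m by (simp add: m1_def)
        then have "2 \<le> \<epsilon> * real m" using Kn by blast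
        have "real r \<le> 2 * real m" using 2(2) m by simp
        also have "\<dots> \<le> \<epsilon> * real m * real m" using \<open>2 \<le> \<epsilon> * real m\<close> by (simp add: mult_right_mono)
        also have "\<dots> \<le> \<epsilon> * real (a m)"
        proof -
          have "real (m * m) \<le> real (a m)" using a_sq[of m] by (simp only: of_nat_le_iff)
          then have "real m * real m \<le> real (a m)" by simp
          then show ?thesis using e by (simp add: mult.assoc mult_left_mono)
        qed
        also have "\<dots> \<le> \<epsilon> * real t" using am_t e by (simp add: mult_left_mono)
        finally show ?thesis .
      qed
      moreover have "real (G (a m)) + real (cl m) \<le> 3 * \<epsilon> * real t"
      proof -
        have "3 * \<epsilon> * real (a m) \<le> 3 * \<epsilon> * real t" using am_t e by (intro mult_left_mono) auto
        then show ?thesis using gam clm by linarith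
      qed
      ultimately show ?thesis by linarith
    next
      case 3
      have "G t \<le> G (a (Suc m))" using t(2) by (rule G_mono)
      then have "real (G t) \<le> 2 * \<epsilon> * real (a (Suc m))" using stepA[of m] m by simp
      also have "real (a (Suc m)) \<le> 2 * real t"
      proof -
        have "a m \<le> Suc m * (a m)^2" using a_le_sq[of m] by (metis le_trans mult_le_mono1 le_add1 mult_Suc)
        then have "a (Suc m) \<le> 2 * t" using 3 a_Suc_split[of m] by linarith
        then show ?thesis by (metis of_nat_le_iff of_nat_mult of_nat_numeral)
      qed
      finally show ?thesis using e by simp
    qed
  qed
  show "\<exists>N. \<forall>t\<ge>N. r1 OT t \<le> \<delta>"
  proof (intro exI[of _ "a (Suc m1)"] allI impI)
    fix t assume tN: "a (Suc m1) \<le> t"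
    obtain m where m: "m \<ge> Suc m1" "a m \<le> t" "t < a (Suc m)" using level_exists[OF tN] by blast
    have "real (G (Suc t)) \<le> 6 * \<epsilon> * real (Suc t)"
      by (rule stepB[OF m(1)]) (use m in auto)
    also have "\<dots> \<le> 12 * \<epsilon> * real t"
    proof -
      have "t \<ge> 1" using tN a_pos[of "Suc m1"] by simp
      then show ?thesis using e by simp
    qed
    finally have "real (G (Suc t)) \<le> \<delta> * real t" by (simp add: \<epsilon>_def)
    moreover have "real t > 0" using tN a_pos[of "Suc m1"] by simp
    ultimately show "r1 OT t \<le> \<delta>" by (simp add: r1_OT divide_le_eq)
  qed
qed


lemma LD1:
  assumes c: "c > 0" and ev: "\<exists>N. \<forall>n\<ge>N. c \<le> r1 Oy n"
  shows "\<exists>N. \<forall>t\<ge>N. c / 24 \<le> r1 OT t"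
proof -
  obtain n0 where n0: "\<forall>n\<ge>n0. c \<le> r1 Oy n" using ev by blast
  obtain m0a where m0a: "\<forall>m\<ge>m0a. cl m \<le> a m" using cl_le_a by blast
  obtain K :: nat where K: "2 * (real M + 1) / c < K" using reals_Archimedean2 by blast
  define m1 where "m1 = n0 + m0a + K + 1"
  have fbig: "real (f n) - real (Suc M) \<ge> c * real n / 2" if "n \<ge> m1" for n
  proof -
    have npos: "real n > 0" using that by (simp add: m1_def)
    have "c \<le> r1 Oy n" using n0 that by (simp add: m1_def)
    then have fn: "real (f n) \<ge> c * real n" using npos by (simp add: r1_Oy pos_le_divide_eq)
    have "real K \<le> real n" using that by (simp add: m1_def)
    then have "2 * (real M + 1) / c < real n" using K by linarith
    then have "2 * (real M + 1) < c * real n" using c by (simp add: divide_less_eq mult.commute)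
    then show ?thesis using fn by simp
  qed
  have blk: "real (G (s m + Suc m * (a m)^2)) \<ge> c / 2 * real (Suc m) * real ((a m)^2)" if m: "m \<ge> m1" for m
  proof -
    have "real ((a m)^2) * (c * real (Suc m) / 2) \<le> real ((a m)^2) * (real (f (Suc m)) - real (Suc M))"
      using fbig[of "Suc m"] m by (intro mult_left_mono) auto
    then have "real ((a m)^2) * (c * real (Suc m) / 2) \<le> real (G (s m + Suc m * (a m)^2))"
      using G_block_low[of m] by linarith
    moreover have "c / 2 * real (Suc m) * real ((a m)^2) = real ((a m)^2) * (c * real (Suc m) / 2)"
      by (simp only: mult_ac times_divide_eq_right divide_mult_eq)
    ultimately show ?thesis by linarith
  qed
  have stepA: "real (G (a (Suc m))) \<ge> c / 8 * real (a (Suc m))" if m: "m \<ge> m1" for m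
  proof -
    have "cl m \<le> a m" using m0a m by (simp add: m1_def)
    then have "a (Suc m) \<le> 4 * Suc m * (a m)^2" by (rule a_Suc_le4)
    then have "real (a (Suc m)) \<le> 4 * real (Suc m) * real ((a m)^2)"
      by (metis of_nat_le_iff of_nat_mult of_nat_numeral)
    then have "c / 8 * real (a (Suc m)) \<le> c / 8 * (4 * real (Suc m) * real ((a m)^2))"
      using c by (intro mult_left_mono) auto
    also have "\<dots> = c / 2 * real (Suc m) * real ((a m)^2)" by simp
    also have "\<dots> \<le> real (G (s m + Suc m * (a m)^2))" by (rule blk[OF m])
    also have "\<dots> \<le> real (G (a (Suc m)))" by (simp add: G_mono a_Suc_split)
    finally show ?thesis .
  qed
  have stepB: "real (G t) \<ge> c / 24 * real t" if m: "m \<ge> Suc m1" and t: "a m \<le> t" "t \<le> a (Suc m)" for m t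
  proof -
    obtain m' where m': "m = Suc m'" "m' \<ge> m1" using m by (cases m) auto
    have gam: "real (G (a m)) \<ge> c / 8 * real (a m)" using stepA[OF m'(2)] m'(1) by simp
    have clm: "cl m \<le> a m" using m0a m by (simp add: m1_def)
    have Ga: "G (a m) \<le> G t" using t(1) by (rule G_mono)
    consider "t \<le> s m" | p r where "p < (a m)^2" "r < Suc m" "t = s m + p * Suc m + r"
      | "s m + Suc m * (a m)^2 \<le> t" using regions[OF t(1)] by blast
    then show ?thesis
    proof cases
      case 1
      have "t \<le> 2 * a m" using 1 clm by (simp add: s_def)
      then have "real t \<le> 2 * real (a m)" by (metis of_nat_le_iff of_nat_mult of_nat_numeral)
      then have "c / 24 * real t \<le> c / 24 * (2 * real (a m))" using c by (intro mult_left_mono) auto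
      also have "\<dots> \<le> c / 8 * real (a m)" using c by simp
      finally show ?thesis using gam Ga by linarith
    next
      case (2 p r)
      have "G (s m + p * Suc m) \<ge> G (s m) + p * (f (Suc m) - Suc M)"
        using blocks_lower 2(1) by simp
      moreover have "G (s m) \<ge> G (a m)" by (rule G_mono) (simp add: s_def)
      moreover have "G t \<ge> G (s m + p * Suc m)" using 2(3) by (intro G_mono) simp
      ultimately have "G t \<ge> G (a m) + p * (f (Suc m) - Suc M)" by linarith
      then have "real (G t) \<ge> real (G (a m) + p * (f (Suc m) - Suc M))" by (simp only: of_nat_le_iff)
      then have Gt: "real (G t) \<ge> real (G (a m)) + real p * real (f (Suc m) - Suc M)" by simp
      have "real (f (Suc m) - Suc M) \<ge> c * real (Suc m) / 2"
        using fbig[of "Suc m"] m by simp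
      then have "real p * real (f (Suc m) - Suc M) \<ge> real p * (c * real (Suc m) / 2)"
        by (intro mult_left_mono) auto
      moreover have "c / 2 * real (p * Suc m) = real p * (c * real (Suc m) / 2)"
        by (simp only: of_nat_mult mult_ac times_divide_eq_right divide_mult_eq)
      ultimately have G2: "real (G t) \<ge> c / 8 * real (a m) + c / 2 * real (p * Suc m)"
        using Gt gam by linarith
      have "t \<le> 3 * a m + p * Suc m"
      proof -
        have "Suc m \<le> a m" using a_ge[of m] by simp
        then show ?thesis using 2 clm by (simp add: s_def)
      qed
      then have "real t \<le> 3 * real (a m) + real (p * Suc m)" by (metis of_nat_add of_nat_le_iff of_nat_mult of_nat_numeral)
      then have "c / 24 * real t \<le> c / 24 * (3 * real (a m) + real (p * Suc m))" using c by (intro mult_left_mono) auto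
      also have "\<dots> \<le> c / 8 * real (a m) + c / 2 * real (p * Suc m)"
      proof -
        define X where "X = real (p * Suc m)"
        have X0: "X \<ge> 0" by (simp add: X_def)
        have "c / 24 * X \<le> c / 2 * X" using c X0 by (intro mult_right_mono) auto
        moreover have "c / 24 * (3 * real (a m) + X) = c / 8 * real (a m) + c / 24 * X" by (simp add: algebra_simps)
        ultimately show ?thesis unfolding X_def[symmetric] by linarith
      qed
      finally show ?thesis using G2 by linarith
    next
      case 3
      have "real (G t) \<ge> real (G (s m + Suc m * (a m)^2))" using 3 by (simp add: G_mono)
      moreover have "real (G (s m + Suc m * (a m)^2)) \<ge> c / 2 * real (Suc m) * real ((a m)^2)"
        using blk m by simp
      moreover have "real t \<le> 4 * real (Suc m) * real ((a m)^2)"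
      proof -
        have "a (Suc m) \<le> 4 * Suc m * (a m)^2" using clm by (rule a_Suc_le4)
        then have "t \<le> 4 * Suc m * (a m)^2" using t(2) by linarith
        then show ?thesis by (metis of_nat_le_iff of_nat_mult of_nat_numeral)
      qed
      then have "c / 24 * real t \<le> c / 24 * (4 * real (Suc m) * real ((a m)^2))" using c by (intro mult_left_mono) auto
      moreover have "c / 24 * (4 * real (Suc m) * real ((a m)^2)) \<le> c / 2 * real (Suc m) * real ((a m)^2)"
      proof -
        have h: "c / 24 * (4 * X) \<le> c / 2 * X" if "X \<ge> 0" for X :: real
          using c that by simp
        show ?thesis using h[of "real (Suc m) * real ((a m)^2)"] by (simp only: mult.assoc) simp
      qed
      ultimately show ?thesis by linarith
    qed
  qed
  show ?thesis
  proof (intro exI[of _ "a (Suc m1)"] allI impI)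
    fix t assume tN: "a (Suc m1) \<le> t"
    obtain m where m: "m \<ge> Suc m1" "a m \<le> t" "t < a (Suc m)" using level_exists[OF tN] by blast
    have "c / 24 * real t \<le> real (G t)" by (rule stepB[OF m(1)]) (use m in auto)
    also have "\<dots> \<le> real (G (Suc t))" by (simp add: G_mono)
    finally have "c / 24 * real t \<le> real (G (Suc t))" .
    moreover have "real t > 0" using tN a_pos[of "Suc m1"] by simp
    ultimately show "c / 24 \<le> r1 OT t" by (simp add: r1_OT pos_le_divide_eq)
  qed
qed


lemma upper_equiv: "upper_density OT > 0 \<longleftrightarrow> upper_density Oy > 0"
proof
  assume "upper_density Oy > 0"
  then obtain c where c: "c > 0" "\<forall>N. \<exists>n\<ge>N. c \<le> r1 Oy n" using E1a by blast
  have "\<forall>N. \<exists>t\<ge>N. c / 8 \<le> r1 OT t" by (rule UD1[OF c])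
  then show "upper_density OT > 0" by (rule E1b[rotated]) (use c in simp)
next
  assume pos: "upper_density OT > 0"
  show "upper_density Oy > 0"
  proof (rule ccontr)
    assume np: "\<not> upper_density Oy > 0"
    have H: "\<forall>\<epsilon>>0. \<exists>N. \<forall>n\<ge>N. real (f n) \<le> \<epsilon> * real n"
    proof (intro allI impI)
      fix \<epsilon> :: real assume e: "\<epsilon> > 0"
      have "\<not> (\<forall>N. \<exists>n\<ge>N. \<epsilon> \<le> r1 Oy n)" using E1b[OF e] np by blast
      then obtain N where N: "\<forall>n\<ge>N. r1 Oy n < \<epsilon>" by (meson not_le)
      have "real (f n) \<le> \<epsilon> * real n" if "n \<ge> Suc N" for n
      proof -
        have "r1 Oy n < \<epsilon>" using N that by simp
        moreover have "real n > 0" using that by simp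
        ultimately show ?thesis by (simp add: r1_Oy divide_less_eq less_imp_le)
      qed
      then show "\<exists>N. \<forall>n\<ge>N. real (f n) \<le> \<epsilon> * real n" by blast
    qed
    obtain c where c: "c > 0" "\<forall>N. \<exists>t\<ge>N. c \<le> r1 OT t" using E1a[OF pos] by blast
    obtain N where N: "\<forall>t\<ge>N. r1 OT t \<le> c / 2" using UD2[OF H] c(1) by (meson half_gt_zero)
    obtain t where "t \<ge> N" "c \<le> r1 OT t" using c(2) by blast
    then show False using N c(1) by fastforce
  qed
qed

lemma lower_equiv: "lower_density OT > 0 \<longleftrightarrow> lower_density Oy > 0"
proof
  assume "lower_density Oy > 0"
  then obtain c where c: "c > 0" "\<exists>N. \<forall>n\<ge>N. c \<le> r1 Oy n" using E2a by blast
  have "\<exists>N. \<forall>t\<ge>N. c / 24 \<le> r1 OT t" by (rule LD1[OF c])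
  then show "lower_density OT > 0" by (rule E2b[rotated]) (use c in simp)
next
  assume pos: "lower_density OT > 0"
  show "lower_density Oy > 0"
  proof (rule ccontr)
    assume np: "\<not> lower_density Oy > 0"
    obtain c where c: "c > 0" "\<exists>N. \<forall>t\<ge>N. c \<le> r1 OT t" using E2a[OF pos] by blast
    have "\<not> (\<exists>N. \<forall>n\<ge>N. c / 2 \<le> r1 Oy n)" using E2b[of "c / 2" Oy] np c(1) by auto
    then have fr: "\<forall>N. \<exists>n\<ge>N. r1 Oy n < c / 2" by (meson not_le)
    obtain N where N: "\<forall>t\<ge>N. c \<le> r1 OT t" using c(2) by blast
    obtain t where "t \<ge> N" "r1 OT t < c" using LD2[OF c(1) fr] by blast
    then show False using N by fastforce
  qed
qed

end

lemma mod_inj_window: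
  fixes n :: nat
  assumes n: "n > 0"
  shows "inj_on (\<lambda>q. (q - s) mod n) {q \<in> {u..<u+n}. s \<le> q}"
proof (rule inj_onI)
  fix q1 q2 assume q1: "q1 \<in> {q \<in> {u..<u+n}. s \<le> q}" and q2: "q2 \<in> {q \<in> {u..<u+n}. s \<le> q}"
    and e: "(q1 - s) mod n = (q2 - s) mod n"
  have key: "x = y" if A: "x \<in> {q \<in> {u..<u+n}. s \<le> q}" "y \<in> {q \<in> {u..<u+n}. s \<le> q}"
    "(y - s) mod n = (x - s) mod n" "x \<le> y" for x y
  proof -
    have "y - s \<ge> x - s" using A by simp
    then obtain t where t: "y - s = (x - s) + n * t" using mod_eq_nat1E[OF A(3)] by blast
    have "y - x < n" using A by auto
    moreover have "y - x = n * t" using t A by auto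
    ultimately have "n * t < n" by simp
    then have "t = 0" by (cases t) auto
    then have "y - s = x - s" using t by simp
    moreover have "s \<le> x" "x \<le> y" using A by auto
    ultimately show ?thesis by arith
  qed
  show "q1 = q2"
  proof (cases "q1 \<le> q2")
    case True then show ?thesis using key[OF q1 q2] e by simp
  next
    case False then show ?thesis using key[OF q2 q1] e by simp
  qed
qed

lemma mod_count1:
  fixes n :: nat
  assumes n: "n > 0" and R: "R \<subseteq> {..<n}"
  shows "card {q \<in> {u..<u+n}. s \<le> q \<and> (q - s) mod n \<in> R} \<le> card R"
proof -
  have "inj_on (\<lambda>q. (q - s) mod n) {q \<in> {u..<u+n}. s \<le> q \<and> (q - s) mod n \<in> R}"
    using mod_inj_window[OF n, of s u] by (rule inj_on_subset) auto
  moreover have "(\<lambda>q. (q - s) mod n) ` {q \<in> {u..<u+n}. s \<le> q \<and> (q - s) mod n \<in> R} \<subseteq> R" by auto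
  moreover have "finite R" using R finite_subset by blast
  ultimately have "card ((\<lambda>q. (q - s) mod n) ` {q \<in> {u..<u+n}. s \<le> q \<and> (q - s) mod n \<in> R}) = card {q \<in> {u..<u+n}. s \<le> q \<and> (q - s) mod n \<in> R}"
    "card ((\<lambda>q. (q - s) mod n) ` {q \<in> {u..<u+n}. s \<le> q \<and> (q - s) mod n \<in> R}) \<le> card R"
    by (auto intro: card_image card_mono)
  then show ?thesis by linarith
qed

lemma mod_countK:
  fixes n :: nat
  assumes n: "n > 0" and R: "R \<subseteq> {..<n}"
  shows "card {q \<in> {u..<u+K*n}. s \<le> q \<and> (q - s) mod n \<in> R} \<le> K * card R"
proof (induction K)
  case 0 then show ?case by simp
next
  case (Suc K)
  have "{q \<in> {u..<u+Suc K*n}. s \<le> q \<and> (q - s) mod n \<in> R} \<subseteq>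
        {q \<in> {u..<u+K*n}. s \<le> q \<and> (q - s) mod n \<in> R} \<union> {q \<in> {(u+K*n)..<(u+K*n)+n}. s \<le> q \<and> (q - s) mod n \<in> R}"
    by auto
  then have "card {q \<in> {u..<u+Suc K*n}. s \<le> q \<and> (q - s) mod n \<in> R} \<le>
        card ({q \<in> {u..<u+K*n}. s \<le> q \<and> (q - s) mod n \<in> R} \<union> {q \<in> {(u+K*n)..<(u+K*n)+n}. s \<le> q \<and> (q - s) mod n \<in> R})"
    by (intro card_mono) auto
  also have "\<dots> \<le> card {q \<in> {u..<u+K*n}. s \<le> q \<and> (q - s) mod n \<in> R} + card {q \<in> {(u+K*n)..<(u+K*n)+n}. s \<le> q \<and> (q - s) mod n \<in> R}"
    by (rule card_Un_le)
  also have "\<dots> \<le> K * card R + card R" using Suc.IH mod_count1[OF n R, of "u + K * n" s] by linarith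
  finally show ?case by simp
qed

lemma mod_count:
  fixes n :: nat
  assumes n: "n > 0" and R: "R \<subseteq> {..<n}"
  shows "card {q \<in> {u..<u+len}. s \<le> q \<and> (q - s) mod n \<in> R} \<le> (len div n + 1) * card R"
proof -
  have "len div n * n + len mod n = len" by (rule div_mult_mod_eq)
  moreover have "len mod n < n" using n by simp
  moreover have "(len div n + 1) * n = len div n * n + n" by simp
  ultimately have "len < (len div n + 1) * n" by linarith
  then have "{q \<in> {u..<u+len}. s \<le> q \<and> (q - s) mod n \<in> R} \<subseteq> {q \<in> {u..<u+(len div n + 1)*n}. s \<le> q \<and> (q - s) mod n \<in> R}"
    by auto
  then have "card {q \<in> {u..<u+len}. s \<le> q \<and> (q - s) mod n \<in> R} \<le> card {q \<in> {u..<u+(len div n + 1)*n}. s \<le> q \<and> (q - s) mod n \<in> R}"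
    by (intro card_mono) auto
  also have "\<dots> \<le> (len div n + 1) * card R" by (rule mod_countK[OF n R])
  finally show ?thesis .
qed

lemma card_shift_window:
  fixes D u v :: nat
  shows "card ((\<lambda>x. x + D) ` X \<inter> {u..<v}) \<le> card (X \<inter> {u - D..<v - D})"
proof -
  have "(\<lambda>x. x + D) ` X \<inter> {u..<v} \<subseteq> (\<lambda>x. x + D) ` (X \<inter> {u - D..<v - D})"
  proof
    fix w assume "w \<in> (\<lambda>x. x + D) ` X \<inter> {u..<v}"
    then obtain x where "x \<in> X" "w = x + D" "u \<le> x + D" "x + D < v" by auto
    moreover have "u - D \<le> x" using \<open>u \<le> x + D\<close> by arith
    moreover have "x < v - D" using \<open>x + D < v\<close> by arith
    ultimately show "w \<in> (\<lambda>x. x + D) ` (X \<inter> {u - D..<v - D})" by (intro image_eqI[of _ _ x]) auto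
  qed
  then have "card ((\<lambda>x. x + D) ` X \<inter> {u..<v}) \<le> card ((\<lambda>x. x + D) ` (X \<inter> {u - D..<v - D}))"
    by (intro card_mono) auto
  also have "\<dots> \<le> card (X \<inter> {u - D..<v - D})" by (rule card_image_le) simp
  finally show ?thesis .
qed

context tsetup begin

definition "RA m = {q. q + L \<le> a m \<and> (\<forall>j<L. T (q + j) = T q)}"
definition "Dd m = a m + d m"
definition "J3 m = {q. s m \<le> q \<and> q < s m + Suc m * (a m)^2 \<and> (q - s m) mod Suc m \<in> {Suc m - (L - 1)..<Suc m}}"
definition "Jm m = {a m - (L - 1)..<a m} \<union> {s m - (L - 1)..<s m} \<union> J3 m"

lemma Dd_eq: "Dd m = s m + Suc m * (a m)^2" by (simp add: Dd_def d_def s_def)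
lemma a_Suc_Dd: "a (Suc m) = Dd m + a m" by (simp add: Dd_def a_Suc')

lemma RA_sub: "RA m \<subseteq> {..<a m}" using L3 by (auto simp: RA_def)
lemma RA_finite: "finite (RA m)" using RA_sub finite_subset by blast
lemma card_RA_le: "card (RA m) \<le> a m" using card_mono[OF _ RA_sub] by simp

lemma RA_decomp: "RA (Suc m) \<subseteq> RA m \<union> (\<lambda>q. q + Dd m) ` RA m \<union> Jm m"
proof
  fix q assume q: "q \<in> RA (Suc m)"
  then have qL: "q + L \<le> a (Suc m)" and run: "\<forall>j<L. T (q + j) = T q" by (auto simp: RA_def)
  consider "q + L \<le> a m" | "q < a m" "\<not> q + L \<le> a m" | "a m \<le> q" "q < s m" | "s m \<le> q" "q < Dd m" | "Dd m \<le> q"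
    by linarith
  then show "q \<in> RA m \<union> (\<lambda>q. q + Dd m) ` RA m \<union> Jm m"
  proof cases
    case 1 then show ?thesis using run by (simp add: RA_def)
  next
    case 2 then show ?thesis by (auto simp: Jm_def)
  next
    case 3
    show ?thesis
    proof (cases "q + L \<le> s m")
      case False then show ?thesis using 3 by (auto simp: Jm_def)
    next
      case True
      obtain x where x: "x \<in> PiL k L" "is_prefix (C (Suc m)) x"
        using C_contained[of "Suc m"] by (auto simp: contained_def)
      define p where "p = q - a m"
      have pL: "p + L \<le> cl m" using True 3 by (simp add: p_def s_def)
      have "x (p + j) = T (q + j)" if "j < L" for j
      proof -
        have "p + j < cl m" using pL that by simp
        then have "T (a m + (p + j)) = C (Suc m) ! (p + j)" by (rule T_C)
        moreover have "x (p + j) = C (Suc m) ! (p + j)" using x(2) \<open>p + j < cl m\<close> by (simp add: is_prefix_def cl_def)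
        moreover have "a m + (p + j) = q + j" using 3 by (simp add: p_def)
        ultimately show ?thesis by simp
      qed
      then have "\<forall>j<L. x (p + j) = x p"
      proof (intro allI impI)
        fix j assume j: "j < L"
        have "0 < L" using L3 by simp
        have "x (p + j) = T (q + j)" using \<open>\<And>j. j < L \<Longrightarrow> x (p + j) = T (q + j)\<close> j by blast
        also have "\<dots> = T q" using run j by blast
        also have "\<dots> = T (q + 0)" by simp
        also have "\<dots> = x (p + 0)" using \<open>\<And>j. j < L \<Longrightarrow> x (p + j) = T (q + j)\<close> \<open>0 < L\<close> by metis
        finally show "x (p + j) = x p" by simp
      qed
      then show ?thesis using PiL_norun[OF x(1), of p] by auto
    qed
  next
    case 4
    define t where "t = (q - s m) div Suc m"
    define r where "r = (q - s m) mod Suc m"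
    have "t * Suc m + r = q - s m" unfolding t_def r_def by (rule div_mult_mod_eq)
    then have qe: "q = s m + t * Suc m + r" using 4 by linarith
    have rn: "r < Suc m" by (simp add: r_def)
    have "t * Suc m < (a m)^2 * Suc m" using 4 qe by (simp add: Dd_eq mult.commute)
    then have ta: "t < (a m)^2" by (metis mult_less_cancel2)
    show ?thesis
    proof (cases "r + L \<le> Suc m")
      case True
      have "y (r + j) = y r" if "j < L" for j
      proof -
        have "T (s m + t * Suc m + (r + j)) = y (r + j)" using T_Y[OF ta, of "r + j"] True that by simp
        moreover have "T (s m + t * Suc m + (r + 0)) = y (r + 0)" using T_Y[OF ta, of r] rn by simp
        ultimately show ?thesis using run that qe by (simp add: add.assoc)
      qed
      then show ?thesis using PiL_norun[OF yPiL, of r] by auto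
    next
      case False
      then have "q \<in> J3 m" using 4 rn by (auto simp: J3_def Dd_eq r_def)
      then show ?thesis by (simp add: Jm_def)
    qed
  next
    case 5
    define p where "p = q - Dd m"
    have pL: "p + L \<le> a m" using qL 5 a_Suc_Dd[of m] by (simp add: p_def)
    have "T (q + j) = T (p + j)" if "j < L" for j
    proof -
      have "p + j < a m" using pL that by simp
      then have "T (a m + d m + (p + j)) = T (p + j)" by (rule T_copy)
      moreover have "a m + d m + (p + j) = q + j" using 5 by (simp add: p_def Dd_def)
      ultimately show ?thesis by simp
    qed
    moreover have "0 < L" using L3 by simp
    ultimately have "\<forall>j<L. T (p + j) = T p" using run by (metis add_0_right)
    then have "p \<in> RA m" using pL by (simp add: RA_def)
    moreover have "q = p + Dd m" using 5 by (simp add: p_def)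
    ultimately show ?thesis by blast
  qed
qed


lemma card_Ico_le: "card {x - c..<(x::nat)} \<le> c" by simp

lemma J_count: "card (Jm m \<inter> {u..<u+len}) \<le> 2 * (L - 1) + (L - 1) * (len div Suc m + 1)"
proof -
  define R where "R = {Suc m - (L - 1)..<Suc m}"
  have R: "R \<subseteq> {..<Suc m}" by (auto simp: R_def)
  have cR: "card R \<le> L - 1" by (simp add: R_def)
  have "J3 m \<inter> {u..<u+len} \<subseteq> {q \<in> {u..<u+len}. s m \<le> q \<and> (q - s m) mod Suc m \<in> R}"
    by (auto simp: J3_def R_def)
  then have "card (J3 m \<inter> {u..<u+len}) \<le> card {q \<in> {u..<u+len}. s m \<le> q \<and> (q - s m) mod Suc m \<in> R}"
    by (intro card_mono) auto
  also have "\<dots> \<le> (len div Suc m + 1) * card R" by (rule mod_count[OF _ R]) simp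
  also have "\<dots> \<le> (len div Suc m + 1) * (L - 1)" using cR by (rule mult_le_mono2)
  finally have c3: "card (J3 m \<inter> {u..<u+len}) \<le> (L - 1) * (len div Suc m + 1)" by (simp add: mult.commute)
  have "Jm m \<inter> {u..<u+len} \<subseteq> {a m - (L - 1)..<a m} \<union> {s m - (L - 1)..<s m} \<union> (J3 m \<inter> {u..<u+len})"
    by (auto simp: Jm_def)
  then have "card (Jm m \<inter> {u..<u+len}) \<le> card ({a m - (L - 1)..<a m} \<union> {s m - (L - 1)..<s m} \<union> (J3 m \<inter> {u..<u+len}))"
    by (intro card_mono) auto
  also have "\<dots> \<le> card {a m - (L - 1)..<a m} + card {s m - (L - 1)..<s m} + card (J3 m \<inter> {u..<u+len})"
    by (meson card_Un_le add_le_mono1 le_trans)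
  also have "\<dots> \<le> (L - 1) + (L - 1) + (L - 1) * (len div Suc m + 1)"
    using c3 card_Ico_le[of "a m" "L - 1"] card_Ico_le[of "s m" "L - 1"] by linarith
  finally show ?thesis by simp
qed

lemma Jm_sub: "Jm m \<subseteq> {..<Dd m}"
  by (auto simp: Jm_def J3_def Dd_eq s_def)

lemma img_sub: "(\<lambda>q. q + Dd m) ` RA m \<subseteq> {Dd m..}" by auto

lemma RA_card_Suc: "card (RA (Suc m)) * Suc m \<le> 4 * L * a (Suc m)"
proof -
  have "RA (Suc m) \<subseteq> RA m \<union> (\<lambda>q. q + Dd m) ` RA m \<union> (Jm m \<inter> {0..<0 + a (Suc m)})"
    using RA_decomp RA_sub[of "Suc m"] by auto
  then have "card (RA (Suc m)) \<le> card (RA m \<union> (\<lambda>q. q + Dd m) ` RA m \<union> (Jm m \<inter> {0..<0 + a (Suc m)}))"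
    by (intro card_mono) (auto simp: RA_finite)
  also have "\<dots> \<le> card (RA m) + card ((\<lambda>q. q + Dd m) ` RA m) + card (Jm m \<inter> {0..<0 + a (Suc m)})"
    by (meson card_Un_le add_le_mono1 le_trans)
  also have "\<dots> \<le> a m + a m + (2 * (L - 1) + (L - 1) * (a (Suc m) div Suc m + 1))"
    using card_RA_le[of m] card_image_le[OF RA_finite, of "\<lambda>q. q + Dd m" m] J_count[of m 0 "a (Suc m)"]
    by linarith
  finally have c: "card (RA (Suc m)) \<le> 2 * a m + 3 * (L - 1) + (L - 1) * (a (Suc m) div Suc m)"
    by simp
  have h1: "a m * Suc m \<le> a (Suc m)"
    using a_Suc_ge2[of m] a_le_sq[of m] by (metis le_trans mult.commute mult_le_mono2)
  have h2: "Suc m \<le> a (Suc m)" using a_ge[of "Suc m"] by simp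
  have h3: "(a (Suc m) div Suc m) * Suc m \<le> a (Suc m)" by (rule div_times_less_eq_dividend)
  define L1 where "L1 = L - 1"
  define X where "X = a (Suc m) div Suc m"
  have c': "card (RA (Suc m)) \<le> 2 * a m + 3 * L1 + L1 * X" using c by (simp add: L1_def X_def)
  have h3': "X * Suc m \<le> a (Suc m)" using h3 by (simp add: X_def)
  have "card (RA (Suc m)) * Suc m \<le> (2 * a m + 3 * L1 + L1 * X) * Suc m"
    using c' by (rule mult_le_mono1)
  also have "\<dots> = 2 * (a m * Suc m) + 3 * L1 * Suc m + L1 * (X * Suc m)"
    by (simp only: algebra_simps)
  also have "\<dots> \<le> 2 * a (Suc m) + 3 * L1 * a (Suc m) + L1 * a (Suc m)"
    using h1 h2 h3' by (intro add_mono mult_le_mono2) auto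
  also have "\<dots> = (2 + 4 * L1) * a (Suc m)" by (simp only: algebra_simps)
  also have "\<dots> \<le> 4 * L * a (Suc m)"
  proof -
    have "2 + 4 * L1 \<le> 4 * L" using L3 by (simp add: L1_def)
    then show ?thesis by (rule mult_le_mono1)
  qed
  finally show ?thesis .
qed

lemma RA_card: "i \<ge> 1 \<Longrightarrow> card (RA i) * i \<le> 4 * L * a i"
  using RA_card_Suc[of "i - 1"] by (cases i) auto

lemma RA_suffix:
  assumes "i \<le> m" "len \<le> a i"
  shows "card (RA m \<inter> {a m - len..<a m}) \<le> card (RA i \<inter> {a i - len..<a i})"
proof -
  define c where "c = a m - a i"
  have ai: "a i \<le> a m" using a_mono[OF assms(1)] .
  have "RA m \<inter> {a m - len..<a m} \<subseteq> (\<lambda>p. p + c) ` (RA i \<inter> {a i - len..<a i})"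
  proof
    fix q assume q: "q \<in> RA m \<inter> {a m - len..<a m}"
    have qRA: "q \<in> RA m" and q1: "a m - len \<le> q" and q2: "q < a m" using q by auto
    have qL: "q + L \<le> a m" and run: "\<forall>j<L. T (q + j) = T q" using qRA by (auto simp: RA_def)
    define p where "p = q - c"
    have cq: "c \<le> q" using q1 assms(2) ai unfolding c_def by arith
    have qc: "q = p + c" using cq unfolding p_def by arith
    have pa: "p < a i" using q2 cq ai unfolding p_def c_def by arith
    have pL: "p + L \<le> a i" using qL cq ai unfolding p_def c_def by arith
    have pl: "a i - len \<le> p" using q1 cq ai unfolding p_def c_def by arith
    have Tj: "T (q + j) = T (p + j)" if "j < L" for j
    proof -
      have "p + j < a i" using pL that by arith
      then have "T (a m - a i + (p + j)) = T (p + j)" by (rule T_suffix[OF assms(1)])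
      moreover have "q + j = a m - a i + (p + j)" using qc unfolding c_def by arith
      ultimately show ?thesis by (simp only:)
    qed
    have L0: "0 < L" using L3 by simp
    have "\<forall>j<L. T (p + j) = T p"
    proof (intro allI impI)
      fix j assume j: "j < L"
      have "T (p + j) = T (q + j)" using Tj[OF j] by simp
      also have "\<dots> = T q" using run j by blast
      also have "\<dots> = T (p + 0)" using Tj[OF L0] by simp
      finally show "T (p + j) = T p" by simp
    qed
    then have "p \<in> RA i" using pL by (simp add: RA_def)
    then have "p \<in> RA i \<inter> {a i - len..<a i}" using pl pa by simp
    then show "q \<in> (\<lambda>p. p + c) ` (RA i \<inter> {a i - len..<a i})" using qc by blast
  qed
  then have "card (RA m \<inter> {a m - len..<a m}) \<le> card ((\<lambda>p. p + c) ` (RA i \<inter> {a i - len..<a i}))"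
    by (intro card_mono) (auto simp: RA_finite)
  also have "\<dots> \<le> card (RA i \<inter> {a i - len..<a i})" by (rule card_image_le) (simp add: RA_finite)
  finally show ?thesis .
qed

lemma RA_prefix:
  assumes "len \<le> a i"
  shows "RA m \<inter> {..<len} \<subseteq> RA i \<union> {a i - (L - 1)..<a i}"
  using assms by (auto simp: RA_def)


lemma div_bound:
  fixes x kk len J0 :: nat
  assumes "x * kk \<le> len" "J0 \<le> kk" "J0 \<ge> 1"
  shows "real x \<le> real len / real J0"
proof -
  have "x * J0 \<le> x * kk" using assms(2) by (rule mult_le_mono2)
  then have "x * J0 \<le> len" using assms(1) by linarith
  then have "real x * real J0 \<le> real len" by (metis of_nat_le_iff of_nat_mult)
  then show ?thesis using assms(3) by (simp add: pos_le_divide_eq)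
qed

lemma J_bound:
  assumes "J0 \<ge> 1" "J0 \<le> Suc i"
  shows "real (card (Jm i \<inter> {u..<u+len})) \<le> 3 * real L + real L * real len / real J0"
proof -
  have c: "card (Jm i \<inter> {u..<u+len}) \<le> 3 * (L - 1) + (L - 1) * (len div Suc i)"
    using J_count[of i u len] by simp
  have "(len div Suc i) * Suc i \<le> len" by (rule div_times_less_eq_dividend)
  then have d: "real (len div Suc i) \<le> real len / real J0" using assms by (intro div_bound) auto
  have "real (card (Jm i \<inter> {u..<u+len})) \<le> real (3 * (L - 1) + (L - 1) * (len div Suc i))"
    using c by (simp only: of_nat_le_iff)
  also have "\<dots> = 3 * real (L - 1) + real (L - 1) * real (len div Suc i)" by simp
  finally have "real (card (Jm i \<inter> {u..<u+len})) \<le> 3 * real (L - 1) + real (L - 1) * real (len div Suc i)" .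
  also have "\<dots> \<le> 3 * real L + real L * (real len / real J0)"
  proof (intro add_mono mult_mono)
    show "real (L - 1) \<le> real L" by simp
    show "real (len div Suc i) \<le> real len / real J0" by (rule d)
  qed auto
  finally show ?thesis by simp
qed

definition "Bnd J0 x = 6 * real L / real J0 * x + 4 * real L + real (a J0)"

lemma Bnd_mono: "x \<le> x' \<Longrightarrow> Bnd J0 x \<le> Bnd J0 x'"
  unfolding Bnd_def by (intro add_mono mult_left_mono) auto

lemma Bnd_ge: "real (a J0) \<le> Bnd J0 x \<or> x < 0"
  unfolding Bnd_def by (cases "x < 0") auto

lemma Bnd_aJ0: "x \<ge> 0 \<Longrightarrow> real (a J0) \<le> Bnd J0 x"
  unfolding Bnd_def by (auto intro!: add_nonneg_nonneg)

lemma RA_whole: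
  assumes "J0 \<ge> 1" "a m \<le> len"
  shows "real (card (RA m)) \<le> Bnd J0 (real len)"
proof (cases "m < J0")
  case True
  have "real (card (RA m)) \<le> real (a J0)" using card_RA_le[of m] a_mono[of m J0] True by simp
  also have "\<dots> \<le> Bnd J0 (real len)" by (rule Bnd_aJ0) simp
  finally show ?thesis .
next
  case False
  have m1: "m \<ge> 1" using False assms(1) by simp
  have "card (RA m) * m \<le> 4 * L * a m" using RA_card[OF m1] .
  also have "\<dots> \<le> 4 * L * len" using assms(2) by simp
  finally have "card (RA m) * m \<le> 4 * L * len" .
  then have "real (card (RA m)) \<le> real (4 * L * len) / real J0" using False assms(1) by (intro div_bound) auto
  also have "\<dots> \<le> 6 * real L / real J0 * real len" by (simp add: divide_right_mono)
  also have "\<dots> \<le> Bnd J0 (real len)" unfolding Bnd_def by simp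
  finally show ?thesis .
qed

lemma RA_i_bound:
  assumes "J0 \<ge> 1" "J0 \<le> i" "a i \<le> len"
  shows "real (card (RA i)) \<le> 4 * real L * real len / real J0"
proof -
  have "card (RA i) * i \<le> 4 * L * a i" using RA_card[of i] assms by simp
  also have "\<dots> \<le> 4 * L * len" using assms(3) by simp
  finally have "real (card (RA i)) \<le> real (4 * L * len) / real J0" using assms by (intro div_bound) auto
  then show ?thesis by simp
qed

lemma card_window_le: "card (X \<inter> {u..<u+len}) \<le> len"
  by (rule card_win_le)


lemma copy_part:
  assumes "J0 \<ge> 1" "J0 \<le> Suc i" "Dd i < len"
  shows "real (card (RA i)) \<le> real len / real J0"
proof -
  have "card (RA i) * Suc i \<le> a i * Suc i" using card_RA_le[of i] by (rule mult_le_mono1)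
  also have "\<dots> \<le> (a i)^2 * Suc i" using a_le_sq[of i] by (rule mult_le_mono1)
  also have "\<dots> = Suc i * (a i)^2" by (rule mult.commute)
  also have "\<dots> \<le> Dd i" by (simp add: Dd_eq)
  finally have "card (RA i) * Suc i \<le> len" using assms(3) by linarith
  then show ?thesis using assms by (intro div_bound) auto
qed

lemma SB:
  assumes J0: "J0 \<ge> 1"
  shows "real (card (RA m \<inter> {a m - len..<a m})) \<le> Bnd J0 (real len)"
proof (cases "len < a J0")
  case True
  have "card (RA m \<inter> {a m - len..<a m}) \<le> card {a m - len..<a m}" by (intro card_mono) auto
  also have "\<dots> \<le> len" by simp
  finally have "real (card (RA m \<inter> {a m - len..<a m})) \<le> real (a J0)" using True by simp
  also have "\<dots> \<le> Bnd J0 (real len)" by (rule Bnd_aJ0) simp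
  finally show ?thesis .
next
  case False
  then obtain i where i: "i \<ge> J0" "a i \<le> len" "len < a (Suc i)" using level_exists[of J0 len] by auto
  show ?thesis
  proof (cases "m \<le> i")
    case True
    have "card (RA m \<inter> {a m - len..<a m}) \<le> card (RA m)" by (intro card_mono) (auto simp: RA_finite)
    moreover have "real (card (RA m)) \<le> Bnd J0 (real len)"
      using RA_whole[OF J0] a_mono[OF True] i(2) by simp
    ultimately show ?thesis by linarith
  next
    case False
    then have im: "Suc i \<le> m" by simp
    define u where "u = a (Suc i) - len"
    have ul: "u + len = a (Suc i)" using i(3) by (simp add: u_def)
    have "card (RA m \<inter> {a m - len..<a m}) \<le> card (RA (Suc i) \<inter> {a (Suc i) - len..<a (Suc i)})"
      using RA_suffix[OF im] i(3) by simp
    also have "RA (Suc i) \<inter> {a (Suc i) - len..<a (Suc i)} \<subseteq>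
        (RA i \<inter> {u..<u+len}) \<union> ((\<lambda>q. q + Dd i) ` RA i) \<union> (Jm i \<inter> {u..<u+len})"
      using RA_decomp[of i] ul unfolding u_def by auto
    then have "card (RA (Suc i) \<inter> {a (Suc i) - len..<a (Suc i)}) \<le>
        card ((RA i \<inter> {u..<u+len}) \<union> ((\<lambda>q. q + Dd i) ` RA i) \<union> (Jm i \<inter> {u..<u+len}))"
      by (intro card_mono) (auto simp: RA_finite)
    also have "\<dots> \<le> card (RA i \<inter> {u..<u+len}) + card ((\<lambda>q. q + Dd i) ` RA i) + card (Jm i \<inter> {u..<u+len})"
      by (meson card_Un_le add_le_mono1 le_trans)
    finally have c: "card (RA m \<inter> {a m - len..<a m}) \<le> card (RA i \<inter> {u..<u+len}) + card (RA i) + card (Jm i \<inter> {u..<u+len})"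
      using card_image_le[OF RA_finite, of "\<lambda>q. q + Dd i" i] by linarith
    have c1: "real (card (RA i \<inter> {u..<u+len})) \<le> real len / real J0"
    proof (cases "Dd i < len")
      case True
      have "card (RA i \<inter> {u..<u+len}) \<le> card (RA i)" by (intro card_mono) (auto simp: RA_finite)
      then have "real (card (RA i \<inter> {u..<u+len})) \<le> real (card (RA i))" by simp
      moreover have "real (card (RA i)) \<le> real len / real J0" using copy_part[OF J0 _ True] i(1) by simp
      ultimately show ?thesis by linarith
    next
      case False
      have "a (Suc i) = Dd i + a i" by (rule a_Suc_Dd)
      then have "a i \<le> u" using False unfolding u_def by linarith
      then have "RA i \<inter> {u..<u+len} = {}" using RA_sub[of i] by auto
      then show ?thesis by simp
    qed
    have c2: "real (card (RA i)) \<le> 4 * real L * real len / real J0" by (rule RA_i_bound[OF J0 i(1) i(2)])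
    have c3: "real (card (Jm i \<inter> {u..<u+len})) \<le> 3 * real L + real L * real len / real J0"
      using J_bound[OF J0] i(1) by simp
    have "real (card (RA m \<inter> {a m - len..<a m})) \<le> real len / real J0 + 4 * real L * real len / real J0 + (3 * real L + real L * real len / real J0)"
      using c c1 c2 c3 by linarith
    also have "\<dots> = (1 + 5 * real L) / real J0 * real len + 3 * real L"
      using J0 by (simp add: field_simps)
    also have "\<dots> \<le> Bnd J0 (real len)"
    proof -
      have "1 + 5 * real L \<le> 6 * real L" using L3 by simp
      then have "(1 + 5 * real L) / real J0 * real len \<le> 6 * real L / real J0 * real len"
        by (intro mult_right_mono divide_right_mono) auto
      then show ?thesis unfolding Bnd_def by simp
    qed
    finally show ?thesis .
  qed
qed

lemma PB:
  assumes J0: "J0 \<ge> 1"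
  shows "real (card (RA m \<inter> {..<len})) \<le> Bnd J0 (real len)"
proof (cases "len < a J0")
  case True
  have "card (RA m \<inter> {..<len}) \<le> card {..<len}" by (intro card_mono) auto
  then have "real (card (RA m \<inter> {..<len})) \<le> real (a J0)" using True by simp
  also have "\<dots> \<le> Bnd J0 (real len)" by (rule Bnd_aJ0) simp
  finally show ?thesis .
next
  case False
  then obtain i where i: "i \<ge> J0" "a i \<le> len" "len < a (Suc i)" using level_exists[of J0 len] by auto
  show ?thesis
  proof (cases "m \<le> i")
    case True
    have "card (RA m \<inter> {..<len}) \<le> card (RA m)" by (intro card_mono) (auto simp: RA_finite)
    moreover have "real (card (RA m)) \<le> Bnd J0 (real len)"
      using RA_whole[OF J0] a_mono[OF True] i(2) by simp
    ultimately show ?thesis by linarith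
  next
    case False
    have "RA m \<inter> {..<len} \<subseteq> (RA (Suc i) \<inter> {..<len}) \<union> {a (Suc i) - (L - 1)..<a (Suc i)}"
      using RA_prefix[of len "Suc i" m] i(3) by auto
    also have "\<dots> \<subseteq> RA i \<union> ((\<lambda>q. q + Dd i) ` RA i \<inter> {..<len}) \<union> (Jm i \<inter> {0..<0+len}) \<union> {a (Suc i) - (L - 1)..<a (Suc i)}"
      using RA_decomp[of i] by auto
    finally have "card (RA m \<inter> {..<len}) \<le> card (RA i \<union> ((\<lambda>q. q + Dd i) ` RA i \<inter> {..<len}) \<union> (Jm i \<inter> {0..<0+len}) \<union> {a (Suc i) - (L - 1)..<a (Suc i)})"
      by (intro card_mono) (auto simp: RA_finite)
    also have "\<dots> \<le> card (RA i) + card ((\<lambda>q. q + Dd i) ` RA i \<inter> {..<len}) + card (Jm i \<inter> {0..<0+len}) + card {a (Suc i) - (L - 1)..<a (Suc i)}"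
      by (meson card_Un_le add_le_mono1 le_trans)
    finally have c: "card (RA m \<inter> {..<len}) \<le> card (RA i) + card ((\<lambda>q. q + Dd i) ` RA i \<inter> {..<len}) + card (Jm i \<inter> {0..<0+len}) + L"
      by simp
    have c1: "real (card ((\<lambda>q. q + Dd i) ` RA i \<inter> {..<len})) \<le> real len / real J0"
    proof (cases "Dd i < len")
      case True
      have "card ((\<lambda>q. q + Dd i) ` RA i \<inter> {..<len}) \<le> card ((\<lambda>q. q + Dd i) ` RA i)"
        by (intro card_mono) (auto simp: RA_finite)
      also have "\<dots> \<le> card (RA i)" by (rule card_image_le[OF RA_finite])
      finally have "real (card ((\<lambda>q. q + Dd i) ` RA i \<inter> {..<len})) \<le> real (card (RA i))" by simp
      moreover have "real (card (RA i)) \<le> real len / real J0" using copy_part[OF J0 _ True] i(1) by simp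
      ultimately show ?thesis by linarith
    next
      case False
      then have "(\<lambda>q. q + Dd i) ` RA i \<inter> {..<len} = {}" by auto
      then show ?thesis by simp
    qed
    have c2: "real (card (RA i)) \<le> 4 * real L * real len / real J0" by (rule RA_i_bound[OF J0 i(1) i(2)])
    have c3: "real (card (Jm i \<inter> {0..<0+len})) \<le> 3 * real L + real L * real len / real J0"
      using J_bound[OF J0, of i 0 len] i(1) by simp
    have "real (card (RA m \<inter> {..<len})) \<le> 4 * real L * real len / real J0 + real len / real J0 + (3 * real L + real L * real len / real J0) + real L"
      using c c1 c2 c3 by linarith
    also have "\<dots> = (1 + 5 * real L) / real J0 * real len + 4 * real L"
      using J0 by (simp add: field_simps)
    also have "\<dots> \<le> Bnd J0 (real len)"
    proof -
      have "1 + 5 * real L \<le> 6 * real L" using L3 by simp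
      then have "(1 + 5 * real L) / real J0 * real len \<le> 6 * real L / real J0 * real len"
        by (intro mult_right_mono divide_right_mono) auto
      then show ?thesis unfolding Bnd_def by simp
    qed
    finally show ?thesis .
  qed
qed


definition "GB J0 x = Bnd J0 (x + real L) + Bnd J0 x + 3 * real L + real L * x / real J0"

lemma GB_aJ0: "x \<ge> 0 \<Longrightarrow> real (a J0) \<le> GB J0 x"
proof -
  assume x: "x \<ge> 0"
  have "real (a J0) \<le> Bnd J0 (x + real L)" by (rule Bnd_aJ0) (use x in simp)
  moreover have "0 \<le> Bnd J0 x" using Bnd_aJ0[OF x, of J0] by simp
  moreover have "0 \<le> real L * x / real J0" using x by simp
  ultimately show ?thesis unfolding GB_def by linarith
qed

lemma GW:
  assumes J0: "J0 \<ge> 1"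
  shows "real (card (RA m \<inter> {u..<u+len})) \<le> GB J0 (real len)"
proof (induction m arbitrary: u)
  case 0
  have "card (RA 0 \<inter> {u..<u+len}) \<le> a J0"
    using card_mono[OF RA_finite, of "RA 0 \<inter> {u..<u+len}" 0] card_RA_le[of 0] a_mono[of 0 J0] by auto
  then have "real (card (RA 0 \<inter> {u..<u+len})) \<le> real (a J0)" by simp
  also have "\<dots> \<le> GB J0 (real len)" by (rule GB_aJ0) simp
  finally show ?case .
next
  case (Suc m)
  show ?case
  proof (cases "Suc m \<le> J0")
    case True
    have "card (RA (Suc m) \<inter> {u..<u+len}) \<le> a J0"
      using card_mono[OF RA_finite, of "RA (Suc m) \<inter> {u..<u+len}" "Suc m"] card_RA_le[of "Suc m"] a_mono[OF True] by auto
    then have "real (card (RA (Suc m) \<inter> {u..<u+len})) \<le> real (a J0)" by simp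
    also have "\<dots> \<le> GB J0 (real len)" by (rule GB_aJ0) simp
    finally show ?thesis .
  next
    case False
    then have mJ: "J0 \<le> Suc m" by simp
    consider "u + len + L \<le> a m + 1" | "Dd m \<le> u" | "\<not> u + len + L \<le> a m + 1" "u < Dd m" by linarith
    then show ?thesis
    proof cases
      case 1
      have "RA (Suc m) \<inter> {u..<u+len} \<subseteq> RA m \<inter> {u..<u+len}"
        using 1 by (auto simp: RA_def)
      then have "card (RA (Suc m) \<inter> {u..<u+len}) \<le> card (RA m \<inter> {u..<u+len})"
        by (intro card_mono) (auto simp: RA_finite)
      then show ?thesis using Suc.IH[of u] by linarith
    next
      case 2
      have "RA (Suc m) \<inter> {u..<u+len} \<subseteq> (\<lambda>q. q + Dd m) ` RA m \<inter> {u..<u+len}"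
      proof
        fix q assume q: "q \<in> RA (Suc m) \<inter> {u..<u+len}"
        then have "q \<ge> Dd m" using 2 by simp
        moreover have "q \<notin> RA m" using \<open>q \<ge> Dd m\<close> RA_sub[of m] by (auto simp: Dd_def)
        moreover have "q \<notin> Jm m" using \<open>q \<ge> Dd m\<close> Jm_sub[of m] by auto
        ultimately show "q \<in> (\<lambda>q. q + Dd m) ` RA m \<inter> {u..<u+len}" using q RA_decomp[of m] by blast
      qed
      then have "card (RA (Suc m) \<inter> {u..<u+len}) \<le> card ((\<lambda>q. q + Dd m) ` RA m \<inter> {u..<u+len})"
        by (intro card_mono) (auto simp: RA_finite)
      also have "\<dots> \<le> card (RA m \<inter> {u - Dd m..<u + len - Dd m})" by (rule card_shift_window)
      also have "{u - Dd m..<u + len - Dd m} = {(u - Dd m)..<(u - Dd m) + len}" using 2 by auto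
      finally show ?thesis using Suc.IH[of "u - Dd m"] by linarith
    next
      case 3
      have sub: "RA (Suc m) \<inter> {u..<u+len} \<subseteq> (RA m \<inter> {a m - (len + L)..<a m}) \<union> ((\<lambda>q. q + Dd m) ` RA m \<inter> {u..<u+len}) \<union> (Jm m \<inter> {u..<u+len})"
      proof
        fix q assume q: "q \<in> RA (Suc m) \<inter> {u..<u+len}"
        show "q \<in> (RA m \<inter> {a m - (len + L)..<a m}) \<union> ((\<lambda>q. q + Dd m) ` RA m \<inter> {u..<u+len}) \<union> (Jm m \<inter> {u..<u+len})"
        proof (cases "q \<in> RA m")
          case True
          have "q < a m" using True RA_sub[of m] by auto
          moreover have "a m - (len + L) \<le> q" using 3(1) q by auto
          ultimately show ?thesis using True by auto
        next
          case False
          then show ?thesis using q RA_decomp[of m] by blast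
        qed
      qed
      have "card (RA (Suc m) \<inter> {u..<u+len}) \<le> card ((RA m \<inter> {a m - (len + L)..<a m}) \<union> ((\<lambda>q. q + Dd m) ` RA m \<inter> {u..<u+len}) \<union> (Jm m \<inter> {u..<u+len}))"
        using sub by (intro card_mono) (auto simp: RA_finite)
      also have "\<dots> \<le> card (RA m \<inter> {a m - (len + L)..<a m}) + card ((\<lambda>q. q + Dd m) ` RA m \<inter> {u..<u+len}) + card (Jm m \<inter> {u..<u+len})"
        by (meson card_Un_le add_le_mono1 le_trans)
      finally have c: "card (RA (Suc m) \<inter> {u..<u+len}) \<le> card (RA m \<inter> {a m - (len + L)..<a m}) + card ((\<lambda>q. q + Dd m) ` RA m \<inter> {u..<u+len}) + card (Jm m \<inter> {u..<u+len})" .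
      have c1: "real (card (RA m \<inter> {a m - (len + L)..<a m})) \<le> Bnd J0 (real len + real L)"
        using SB[OF J0, of m "len + L"] by simp
      have "card ((\<lambda>q. q + Dd m) ` RA m \<inter> {u..<u+len}) \<le> card (RA m \<inter> {u - Dd m..<u + len - Dd m})"
        by (rule card_shift_window)
      also have "\<dots> \<le> card (RA m \<inter> {..<len})" using 3(2) by (intro card_mono) (auto simp: RA_finite)
      finally have c2: "real (card ((\<lambda>q. q + Dd m) ` RA m \<inter> {u..<u+len})) \<le> Bnd J0 (real len)"
        using PB[OF J0, of m len] by linarith
      have c3: "real (card (Jm m \<inter> {u..<u+len})) \<le> 3 * real L + real L * real len / real J0"
        by (rule J_bound[OF J0 mJ])
      show ?thesis using c c1 c2 c3 unfolding GB_def by linarith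
    qed
  qed
qed

lemma GB_small:
  assumes c: "c > 0"
  shows "\<exists>J0 N. J0 \<ge> 1 \<and> N \<ge> 1 \<and> (\<forall>len\<ge>N. GB J0 (real len) \<le> c * real len)"
proof -
  obtain J0 :: nat where J0: "26 * real L / c < J0" using reals_Archimedean2 by blast
  have "0 \<le> 26 * real L / c" using c by simp
  then have J0pos: "real J0 > 0" using J0 by linarith
  then have J01: "J0 \<ge> 1" by simp
  have a1: "13 * real L / real J0 \<le> c / 2"
  proof -
    have "26 * real L < c * real J0" using J0 c by (simp add: divide_less_eq mult.commute)
    then show ?thesis using J0pos by (simp add: divide_le_eq)
  qed
  define K where "K = 6 * real L * real L / real J0 + 11 * real L + 2 * real (a J0)"
  have K0: "K \<ge> 0" unfolding K_def by simp
  obtain N :: nat where N: "2 * K / c < N" using reals_Archimedean2 by blast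
  have "0 \<le> 2 * K / c" using K0 c by simp
  then have "real N > 0" using N by linarith
  then have N1: "N \<ge> 1" by simp
  have "GB J0 (real len) \<le> c * real len" if len: "len \<ge> N" for len
  proof -
    have lpos: "real len > 0" using len N1 by simp
    have e: "GB J0 (real len) = 13 * real L / real J0 * real len + K"
      unfolding GB_def Bnd_def K_def using J0pos by (simp add: field_simps)
    have "K \<le> c / 2 * real len"
    proof -
      have "2 * K / c < real len" using N len by linarith
      then have "2 * K < c * real len" using c by (simp add: divide_less_eq mult.commute)
      then show ?thesis by simp
    qed
    moreover have "13 * real L / real J0 * real len \<le> c / 2 * real len"
      using a1 lpos by (intro mult_right_mono) auto
    ultimately show ?thesis using e by simp
  qed
  then show ?thesis using J01 N1 by blast
qed

lemma bu_T_notPiL: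
  assumes z: "z \<in> Sigma k" "z \<notin> PiL k L"
  shows "\<exists>M. \<not> banach_upper (Occ T z M) > 0"
proof -
  obtain i where i: "\<forall>j<L. z (i + j) = z i" using notPiL_run[OF z] by blast
  define M where "M = i + L"
  have win: "card (Occ T z M \<inter> {m'+1..m'+len}) \<le> card (RA (m' + i + len + L) \<inter> {(m'+1+i)..<(m'+1+i)+len})" for m' len
  proof -
    define Jb where "Jb = m' + i + len + L"
    have aJ: "m' + i + len + L < a Jb" using a_ge[of Jb] by (simp add: Jb_def)
    have "(\<lambda>p. p + i) ` (Occ T z M \<inter> {m'+1..m'+len}) \<subseteq> RA Jb \<inter> {(m'+1+i)..<(m'+1+i)+len}"
    proof
      fix q assume "q \<in> (\<lambda>p. p + i) ` (Occ T z M \<inter> {m'+1..m'+len})"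
      then obtain p where p: "p \<in> Occ T z M" "m' + 1 \<le> p" "p \<le> m' + len" "q = p + i" by auto
      have ag: "\<forall>j<M. T (p + j) = z j" using p(1) by (simp add: Occ_def)
      have "\<forall>j<L. T (q + j) = T q"
      proof (intro allI impI)
        fix j assume j: "j < L"
        have "T (p + (i + j)) = z (i + j)" using ag j by (simp add: M_def)
        moreover have "T (p + (i + 0)) = z (i + 0)" using ag L3 by (simp add: M_def)
        ultimately show "T (q + j) = T q" using i j p(4) by (simp add: add.assoc)
      qed
      moreover have "q + L \<le> a Jb" using aJ p by simp
      ultimately show "q \<in> RA Jb \<inter> {(m'+1+i)..<(m'+1+i)+len}" using p by (simp add: RA_def)
    qed
    then have "card ((\<lambda>p. p + i) ` (Occ T z M \<inter> {m'+1..m'+len})) \<le> card (RA Jb \<inter> {(m'+1+i)..<(m'+1+i)+len})"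
      by (intro card_mono) (auto simp: RA_finite)
    moreover have "card ((\<lambda>p. p + i) ` (Occ T z M \<inter> {m'+1..m'+len})) = card (Occ T z M \<inter> {m'+1..m'+len})"
      by (rule card_image) (simp add: inj_on_def)
    ultimately show ?thesis by (simp add: Jb_def)
  qed
  have "\<not> banach_upper (Occ T z M) > 0"
  proof (rule E3c, intro allI impI)
    fix c :: real assume c: "c > 0"
    obtain J0 N where JN: "J0 \<ge> 1" "N \<ge> 1" "\<forall>len\<ge>N. GB J0 (real len) \<le> c * real len"
      using GB_small[OF c] by blast
    have "rb (Occ T z M) m' len \<le> c" if len: "len \<ge> N" for len m'
    proof -
      have "real (card (Occ T z M \<inter> {m'+1..m'+len})) \<le> GB J0 (real len)"
        using win[of m' len] GW[OF JN(1), of "m' + i + len + L" "m'+1+i" len] by linarith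
      also have "\<dots> \<le> c * real len" using JN(3) len by blast
      finally have "real (card (Occ T z M \<inter> {m'+1..m'+len})) \<le> c * real len" .
      moreover have "real len > 0" using len JN(2) by simp
      ultimately show ?thesis by (simp add: rb_def divide_le_eq)
    qed
    then show "\<exists>N. \<forall>n\<ge>N. \<forall>m. rb (Occ T z M) m n \<le> c" by blast
  qed
  then show ?thesis by blast
qed

end

context tsetup begin


lemma PiL_Sigma: "PiL k L \<subseteq> Sigma k" by (auto simp: PiL_def)

lemma y_Sig: "y \<in> Sigma k" using yPiL PiL_Sigma by blast

lemma main_xi:
  "\<forall>xi \<in> {upper_density, lower_density, banach_upper, banach_lower}. omega_xi k xi T = omega_xi k xi y"
proof -
  have U: "omega_xi k upper_density T = omega_xi k upper_density y"
  proof -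
    have "\<And>z M. upper_density (Occ T z M) > 0 \<longleftrightarrow> upper_density (Occ y z M) > 0"
    proof -
      fix z M
      interpret tz k L A1 C y z M by unfold_locales
      show "upper_density (Occ T z M) > 0 \<longleftrightarrow> upper_density (Occ y z M) > 0"
        using upper_equiv by (simp add: OT_def Oy_def)
    qed
    then show ?thesis using omega_xi_O[OF T_Sigma mono_upper] omega_xi_O[OF y_Sig mono_upper] by simp
  qed
  have Lo: "omega_xi k lower_density T = omega_xi k lower_density y"
  proof -
    have "\<And>z M. lower_density (Occ T z M) > 0 \<longleftrightarrow> lower_density (Occ y z M) > 0"
    proof -
      fix z M
      interpret tz k L A1 C y z M by unfold_locales
      show "lower_density (Occ T z M) > 0 \<longleftrightarrow> lower_density (Occ y z M) > 0"
        using lower_equiv by (simp add: OT_def Oy_def)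
    qed
    then show ?thesis using omega_xi_O[OF T_Sigma mono_lower] omega_xi_O[OF y_Sig mono_lower] by simp
  qed
  have BU: "omega_xi k banach_upper T = omega_xi k banach_upper y"
  proof -
    have "{z \<in> Sigma k. \<forall>M. banach_upper (Occ x z M) > 0} = PiL k L" if "x = T \<or> x = y" for x
    proof (intro set_eqI iffI)
      fix z assume z: "z \<in> {z \<in> Sigma k. \<forall>M. banach_upper (Occ x z M) > 0}"
      show "z \<in> PiL k L"
      proof (rule ccontr)
        assume "z \<notin> PiL k L"
        then show False using z that bu_T_notPiL bu_y_notPiL by blast
      qed
    next
      fix z assume "z \<in> PiL k L"
      then show "z \<in> {z \<in> Sigma k. \<forall>M. banach_upper (Occ x z M) > 0}"
        using bu_PiL PiL_Sigma that by blast
    qed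
    then show ?thesis using omega_xi_O[OF T_Sigma mono_bu] omega_xi_O[OF y_Sig mono_bu] by simp
  qed
  have BL: "omega_xi k banach_lower T = omega_xi k banach_lower y"
  proof -
    have eT: "{z \<in> Sigma k. \<forall>M. banach_lower (Occ T z M) > 0} = {}"
      using bl_part by blast
    have ey: "{z \<in> Sigma k. \<forall>M. banach_lower (Occ y z M) > 0} = {}"
      using bl_part by blast
    show ?thesis using omega_xi_O[OF T_Sigma mono_bl] omega_xi_O[OF y_Sig mono_bl] eT ey by simp
  qed
  show ?thesis using U Lo BU BL by blast
qed

end

theorem lemma5p3:
  fixes k L :: nat and A1 :: "nat list" and C :: "nat \<Rightarrow> nat list" and y :: "nat \<Rightarrow> nat"
  assumes "k \<ge> 2" and "L \<ge> 3"
    and "bij_betw C {1..} {w. contained (PiL k L) w}"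
    and "set A1 \<subseteq> {..<k}" and "\<not> contained (PiL k L) A1"
    and "(\<lambda>m. real (length (C (Suc m))) / real (length (Aw A1 C y m))) \<longlonglongrightarrow> 0"
    and "y \<in> Trans k L"
  shows "(\<forall>xi \<in> {upper_density, lower_density, banach_upper, banach_lower}.
            omega_xi k xi (Tmap A1 C y) = omega_xi k xi y)
         \<and> omega_shift k y \<subset> omega_shift k (Tmap A1 C y)"
proof -
  interpret tsetup k L A1 C y using assms by unfold_locales
  show ?thesis using main_xi omega_strict unfolding T_def by blast
qed


end
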